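(* There exist $\epsilon_0>0$ and a positive function $\kappa$ on $(0,\epsilon_0)$ with $\kappa(\epsilon)\to0$ as $\epsilon\to0$ such that for every $\epsilon\in(0,\epsilon_0)$, every $L$, every $B\in\mathbb{R}$ and all operators $A,C$ on $\mathfrak{H}_\Lambda$, $$|\omega_B^{(\Lambda)}([C,A])|^2\le\sqrt{\tilde D_B^{(\Lambda)}(C)}\sqrt{\kappa(\epsilon)\,\omega_B^{(\Lambda)}(\{C,C^\ast\})+\omega_B^{(\Lambda)}([[C^\ast,H_{\rm p}^{(\Lambda)}(B)],C])}\times\Bigl\{\omega_B^{(\Lambda)}(A[\mathcal{H}_{\rm p}^{(\Lambda)}(B)]^\epsilon A^\ast)+\omega_B^{(\Lambda)}(A^\ast[\mathcal{H}_{\rm p}^{(\Lambda)}(B)]^\epsilon A)\Bigr\},$$ where $\tilde D_B^{(\Lambda)}(C)=\omega_B^{(\Lambda)}(CP_{\rm ex}^{(\Lambda)}(B)[\mathcal{H}_{\rm p}^{(\Lambda)}(B)]^{-1}C^\ast)+\omega_B^{(\Lambda)}(C^\ast P_{\rm ex}^{(\Lambda)}(B)[\mathcal{H}_{\rm p}^{(\Lambda)}(B)]^{-1}C)$.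
   Context: Spin-$S$ operators $S_x^{(i)}$ at sites of $\Lambda=\Lambda_L=\{-L+1,\dots,L\}^d$ (periodic boundary conditions) acting on $\mathfrak{H}_\Lambda=\bigotimes_{x\in\Lambda}\mathbb{C}^{2S+1}$; $H_{\rm p}^{(\Lambda)}(B)=\sum_{\{x,y\}\subset\Lambda:|x-y|=1}\mathbf{S}_x\cdot\mathbf{S}_y-B\sum_{x\in\Lambda}(-1)^{x^{(1)}+\cdots+x^{(d)}}S_x^{(3)}$. $E_0^{(\Lambda)}(B)$ is its ground-state energy, $\mathcal{H}_{\rm p}^{(\Lambda)}(B)=H_{\rm p}^{(\Lambda)}(B)-E_0^{(\Lambda)}(B)\ge0$, with powers defined by functional calculus ($0^\epsilon=0$). $P_0^{(\Lambda)}(B)$ is the projection onto the ground-state space, $P_{\rm ex}^{(\Lambda)}(B)=1-P_0^{(\Lambda)}(B)$, and $P_{\rm ex}^{(\Lambda)}(B)[\mathcal{H}_{\rm p}^{(\Lambda)}(B)]^{-1}$ denotes the inverse of $\mathcal{H}_{\rm p}^{(\Lambda)}(B)$ on the range of $P_{\rm ex}^{(\Lambda)}(B)$ (zero on the ground-state space). $\omega_B^{(\Lambda)}(\cdot)={\rm Tr}[P_0^{(\Lambda)}(B)(\cdot)]/{\rm Tr}P_0^{(\Lambda)}(B)$. $\{X,Y\}=XY+YX$. *)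

theory Defs
  imports Complex_Main
begin

text \<open>Spin S is encoded by n = 2S (a positive natural number).  The local
  basis of C^(2S+1) is indexed by k in {0..n}, with S^(3) eigenvalue m = k - n/2.
  Sites are integer lists of length d; a basis vector of the tensor product
  Hilbert space is a configuration sigma : site -> {0..n} (extended by 0 off the box).\<close>

type_synonym site = "int list"
type_synonym conf = "site \<Rightarrow> nat"
type_synonym op = "conf \<Rightarrow> conf \<Rightarrow> complex"

definition box :: "nat \<Rightarrow> nat \<Rightarrow> site set" where
  "box d L = {x. length x = d \<and> (\<forall>i<d. - int L + 1 \<le> x ! i \<and> x ! i \<le> int L)}"

definition confs :: "nat \<Rightarrow> nat \<Rightarrow> nat \<Rightarrow> conf set" where
  "confs n d L = {\<sigma>. (\<forall>x\<in>box d L. \<sigma> x \<le> n) \<and> (\<forall>x. x \<notin> box d L \<longrightarrow> \<sigma> x = 0)}"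

text \<open>Nearest neighbours with periodic boundary conditions (torus of side 2L).\<close>
definition nn :: "nat \<Rightarrow> nat \<Rightarrow> site \<Rightarrow> site \<Rightarrow> bool" where
  "nn d L x y \<longleftrightarrow> x \<in> box d L \<and> y \<in> box d L \<and>
     (\<exists>i<d. ((x ! i - y ! i) mod (2 * int L) = 1 \<or> (x ! i - y ! i) mod (2 * int L) = 2 * int L - 1)
        \<and> (\<forall>j<d. j \<noteq> i \<longrightarrow> x ! j = y ! j))"

definition mmul :: "conf set \<Rightarrow> op \<Rightarrow> op \<Rightarrow> op" where
  "mmul I A B = (\<lambda>\<sigma> \<tau>. \<Sum>\<rho>\<in>I. A \<sigma> \<rho> * B \<rho> \<tau>)"

definition mvec :: "conf set \<Rightarrow> op \<Rightarrow> (conf \<Rightarrow> complex) \<Rightarrow> conf \<Rightarrow> complex" where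
  "mvec I A v = (\<lambda>\<sigma>. \<Sum>\<tau>\<in>I. A \<sigma> \<tau> * v \<tau>)"

definition madd :: "op \<Rightarrow> op \<Rightarrow> op" where "madd A B = (\<lambda>\<sigma> \<tau>. A \<sigma> \<tau> + B \<sigma> \<tau>)"
definition msub :: "op \<Rightarrow> op \<Rightarrow> op" where "msub A B = (\<lambda>\<sigma> \<tau>. A \<sigma> \<tau> - B \<sigma> \<tau>)"
definition mscale :: "complex \<Rightarrow> op \<Rightarrow> op" where "mscale c A = (\<lambda>\<sigma> \<tau>. c * A \<sigma> \<tau>)"
definition mid :: op where "mid = (\<lambda>\<sigma> \<tau>. if \<sigma> = \<tau> then 1 else 0)"
definition madj :: "op \<Rightarrow> op" where "madj A = (\<lambda>\<sigma> \<tau>. cnj (A \<tau> \<sigma>))"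
definition mtr :: "conf set \<Rightarrow> op \<Rightarrow> complex" where "mtr I A = (\<Sum>\<sigma>\<in>I. A \<sigma> \<sigma>)"

definition comm :: "conf set \<Rightarrow> op \<Rightarrow> op \<Rightarrow> op" where
  "comm I X Y = msub (mmul I X Y) (mmul I Y X)"
definition acomm :: "conf set \<Rightarrow> op \<Rightarrow> op \<Rightarrow> op" where
  "acomm I X Y = madd (mmul I X Y) (mmul I Y X)"

definition eigvec :: "conf set \<Rightarrow> op \<Rightarrow> real \<Rightarrow> (conf \<Rightarrow> complex) \<Rightarrow> bool" where
  "eigvec I H lam v \<longleftrightarrow> (\<forall>\<sigma>. \<sigma> \<notin> I \<longrightarrow> v \<sigma> = 0) \<and> (\<exists>\<sigma>\<in>I. v \<sigma> \<noteq> 0) \<and>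
     (\<forall>\<sigma>\<in>I. mvec I H v \<sigma> = complex_of_real lam * v \<sigma>)"

definition spec :: "conf set \<Rightarrow> op \<Rightarrow> real set" where
  "spec I H = {lam. \<exists>v. eigvec I H lam v}"

text \<open>f(H): the operator acting as multiplication by f(lambda) on every eigenvector
  of H with eigenvalue lambda (well defined for self-adjoint H), zero off I.\<close>
definition fcalc :: "conf set \<Rightarrow> op \<Rightarrow> (real \<Rightarrow> real) \<Rightarrow> op" where
  "fcalc I H f = (THE M. (\<forall>\<sigma> \<tau>. \<sigma> \<notin> I \<or> \<tau> \<notin> I \<longrightarrow> M \<sigma> \<tau> = 0) \<and>
      (\<forall>lam v. eigvec I H lam v \<longrightarrow> (\<forall>\<sigma>\<in>I. mvec I M v \<sigma> = complex_of_real (f lam) * v \<sigma>)))"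

definition mval :: "nat \<Rightarrow> nat \<Rightarrow> real" where "mval n k = real k - real n / 2"

definition spP :: "nat \<Rightarrow> nat \<Rightarrow> nat \<Rightarrow> complex" where
  "spP n k l = (if k = l + 1 \<and> l < n then
      complex_of_real (sqrt ((real n / 2) * (real n / 2 + 1) - mval n l * (mval n l + 1))) else 0)"
definition spM :: "nat \<Rightarrow> nat \<Rightarrow> nat \<Rightarrow> complex" where
  "spM n k l = cnj (spP n l k)"

definition spin :: "nat \<Rightarrow> nat \<Rightarrow> nat \<Rightarrow> nat \<Rightarrow> complex" where
  "spin n a k l =
     (if a = 1 then (spP n k l + spM n k l) / 2
      else if a = 2 then (spP n k l - spM n k l) / (2 * \<i>)
      else (if k = l \<and> k \<le> n then complex_of_real (mval n k) else 0))"

text \<open>Embedding of a single-site matrix M at site x: M_x = M tensor identity.\<close>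
definition op_at :: "site \<Rightarrow> (nat \<Rightarrow> nat \<Rightarrow> complex) \<Rightarrow> op" where
  "op_at x M = (\<lambda>\<sigma> \<tau>. if (\<forall>z. z \<noteq> x \<longrightarrow> \<sigma> z = \<tau> z) then M (\<sigma> x) (\<tau> x) else 0)"

text \<open>H_p(B): sum over unordered nearest-neighbour pairs {x,y} of S_x.S_y
  (written as half the sum over ordered pairs) minus the staggered field term.\<close>
definition Hp :: "nat \<Rightarrow> nat \<Rightarrow> nat \<Rightarrow> real \<Rightarrow> op" where
  "Hp n d L B = (let I = confs n d L in
     (\<lambda>\<sigma> \<tau>. (1/2) * (\<Sum>(x,y)\<in>{(x,y). nn d L x y}. \<Sum>a\<in>{1,2,3::nat}.
                 mmul I (op_at x (spin n a)) (op_at y (spin n a)) \<sigma> \<tau>)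
            - complex_of_real B * (\<Sum>x\<in>box d L. (-1) ^ nat (\<bar>sum_list x\<bar>) * op_at x (spin n 3) \<sigma> \<tau>)))"

definition E0 :: "nat \<Rightarrow> nat \<Rightarrow> nat \<Rightarrow> real \<Rightarrow> real" where
  "E0 n d L B = Min (spec (confs n d L) (Hp n d L B))"

definition Hcal :: "nat \<Rightarrow> nat \<Rightarrow> nat \<Rightarrow> real \<Rightarrow> op" where
  "Hcal n d L B = msub (Hp n d L B) (mscale (complex_of_real (E0 n d L B)) mid)"

definition P0 :: "nat \<Rightarrow> nat \<Rightarrow> nat \<Rightarrow> real \<Rightarrow> op" where
  "P0 n d L B = fcalc (confs n d L) (Hp n d L B) (\<lambda>lam. if lam = E0 n d L B then 1 else 0)"

definition Pex :: "nat \<Rightarrow> nat \<Rightarrow> nat \<Rightarrow> real \<Rightarrow> op" where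
  "Pex n d L B = msub mid (P0 n d L B)"

text \<open>[Hcal]^eps with 0^eps = 0 (powr satisfies 0 powr e = 0).\<close>
definition Hpow :: "nat \<Rightarrow> nat \<Rightarrow> nat \<Rightarrow> real \<Rightarrow> real \<Rightarrow> op" where
  "Hpow n d L B \<epsilon> = fcalc (confs n d L) (Hcal n d L B) (\<lambda>x. x powr \<epsilon>)"

text \<open>Inverse of Hcal on the range of Pex, zero on the ground-state space (inverse 0 = 0).\<close>
definition Hinv :: "nat \<Rightarrow> nat \<Rightarrow> nat \<Rightarrow> real \<Rightarrow> op" where
  "Hinv n d L B = fcalc (confs n d L) (Hcal n d L B) inverse"

definition omega :: "nat \<Rightarrow> nat \<Rightarrow> nat \<Rightarrow> real \<Rightarrow> op \<Rightarrow> complex" where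
  "omega n d L B X = mtr (confs n d L) (mmul (confs n d L) (P0 n d L B) X) / mtr (confs n d L) (P0 n d L B)"

definition Dtil :: "nat \<Rightarrow> nat \<Rightarrow> nat \<Rightarrow> real \<Rightarrow> op \<Rightarrow> complex" where
  "Dtil n d L B C = (let I = confs n d L in
     omega n d L B (mmul I (mmul I (mmul I C (Pex n d L B)) (Hinv n d L B)) (madj C))
   + omega n d L B (mmul I (mmul I (mmul I (madj C) (Pex n d L B)) (Hinv n d L B)) C))"

end

theory Submission
  imports Defs "HOL-Computational_Algebra.Fundamental_Theorem_Algebra" "HOL-Analysis.Convex" "HOL-Library.FuncSet"
begin

lemma lin_dep:
  fixes I :: "'a set" and J :: "'b set" and f :: "'b \<Rightarrow> 'a \<Rightarrow> complex"
  assumes "finite I" "finite J" "card I < card J"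
  shows "\<exists>c. (\<exists>j\<in>J. c j \<noteq> 0) \<and> (\<forall>\<sigma>\<in>I. (\<Sum>j\<in>J. c j * f j \<sigma>) = 0)"
  using assms
proof (induction I arbitrary: J f rule: finite_induct)
  case empty
  then have "J \<noteq> {}" by auto
  then show ?case by (rule_tac x="\<lambda>_. 1" in exI) auto
next
  case (insert a I)
  show ?case
  proof (cases "\<forall>j\<in>J. f j a = 0")
    case True
    from insert.IH[of J f] insert.prems insert.hyps obtain c where
      c: "\<exists>j\<in>J. c j \<noteq> 0" "\<forall>\<sigma>\<in>I. (\<Sum>j\<in>J. c j * f j \<sigma>) = 0" by auto
    show ?thesis using c True by (rule_tac x=c in exI) auto
  next
    case False
    then obtain j0 where j0: "j0 \<in> J" "f j0 a \<noteq> 0" by auto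
    define J' where "J' = J - {j0}"
    define f' where "f' = (\<lambda>j \<sigma>. f j \<sigma> - (f j a / f j0 a) * f j0 \<sigma>)"
    have cJ': "card I < card J'" using insert.prems insert.hyps j0 unfolding J'_def
      by (simp add: card_Diff_singleton)
    from insert.IH[of J' f'] cJ' insert.prems obtain c' where
      c': "\<exists>j\<in>J'. c' j \<noteq> 0" "\<forall>\<sigma>\<in>I. (\<Sum>j\<in>J'. c' j * f' j \<sigma>) = 0"
      unfolding J'_def by auto
    define c where "c = (\<lambda>j. if j = j0 then - (\<Sum>j\<in>J'. c' j * f j a) / f j0 a else c' j)"
    have key: "(\<Sum>j\<in>J. c j * f j \<sigma>) = (\<Sum>j\<in>J'. c' j * f' j \<sigma>)" for \<sigma>
    proof -
      have "(\<Sum>j\<in>J. c j * f j \<sigma>) = c j0 * f j0 \<sigma> + (\<Sum>j\<in>J'. c j * f j \<sigma>)"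
        unfolding J'_def using j0 insert.prems by (simp add: sum.remove)
      also have "(\<Sum>j\<in>J'. c j * f j \<sigma>) = (\<Sum>j\<in>J'. c' j * f j \<sigma>)"
        unfolding c_def J'_def by (rule sum.cong) auto
      also have "(\<Sum>j\<in>J'. c' j * f' j \<sigma>) = (\<Sum>j\<in>J'. c' j * f j \<sigma>) - (\<Sum>j\<in>J'. c' j * f j a) / f j0 a * f j0 \<sigma>"
        unfolding f'_def by (simp add: algebra_simps sum_subtractf sum_distrib_left sum_distrib_right sum_divide_distrib)
      ultimately show ?thesis unfolding c_def by simp
    qed
    show ?thesis
    proof (rule exI[of _ c], intro conjI ballI)
      show "\<exists>j\<in>J. c j \<noteq> 0" using c' unfolding c_def J'_def by auto
    next
      fix \<sigma> assume "\<sigma> \<in> insert a I"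
      then show "(\<Sum>j\<in>J. c j * f j \<sigma>) = 0"
      proof
        assume "\<sigma> = a"
        then show ?thesis unfolding key f'_def using j0 by simp
      next
        assume "\<sigma> \<in> I" then show ?thesis unfolding key using c' by simp
      qed
    qed
  qed
qed


definition happ :: "conf set \<Rightarrow> op \<Rightarrow> (conf \<Rightarrow> complex) \<Rightarrow> conf \<Rightarrow> complex" where
  "happ I H v = (\<lambda>\<sigma>. if \<sigma> \<in> I then mvec I H v \<sigma> else 0)"
definition ip :: "conf set \<Rightarrow> (conf \<Rightarrow> complex) \<Rightarrow> (conf \<Rightarrow> complex) \<Rightarrow> complex" where
  "ip I u v = (\<Sum>\<sigma>\<in>I. cnj (u \<sigma>) * v \<sigma>)"
definition herm :: "conf set \<Rightarrow> op \<Rightarrow> bool" where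
  "herm I H \<longleftrightarrow> (\<forall>\<sigma>\<in>I. \<forall>\<tau>\<in>I. H \<sigma> \<tau> = cnj (H \<tau> \<sigma>))"
definition supp :: "conf set \<Rightarrow> (conf \<Rightarrow> complex) \<Rightarrow> bool" where
  "supp I v \<longleftrightarrow> (\<forall>\<sigma>. \<sigma> \<notin> I \<longrightarrow> v \<sigma> = 0)"

definition hpw :: "conf set \<Rightarrow> op \<Rightarrow> nat \<Rightarrow> (conf \<Rightarrow> complex) \<Rightarrow> conf \<Rightarrow> complex" where
  "hpw I H j = happ I H ^^ j"
definition pev :: "conf set \<Rightarrow> op \<Rightarrow> complex poly \<Rightarrow> (conf \<Rightarrow> complex) \<Rightarrow> conf \<Rightarrow> complex" where
  "pev I H p v = (\<lambda>\<sigma>. \<Sum>j\<le>degree p. coeff p j * hpw I H j v \<sigma>)"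

lemma happ_lin:
  assumes "finite S"
  shows "happ I H (\<lambda>\<sigma>. \<Sum>j\<in>S. c j * g j \<sigma>) = (\<lambda>\<sigma>. \<Sum>j\<in>S. c j * happ I H (g j) \<sigma>)"
  unfolding happ_def mvec_def
  by (auto simp: sum_distrib_left sum_distrib_right mult_ac intro!: ext sum.swap)

lemma happ_sc: "happ I H (\<lambda>\<sigma>. c * v \<sigma>) = (\<lambda>\<sigma>. c * happ I H v \<sigma>)"
  unfolding happ_def mvec_def by (auto simp: sum_distrib_left mult_ac intro!: ext)

lemma happ_add: "happ I H (\<lambda>\<sigma>. u \<sigma> + v \<sigma>) = (\<lambda>\<sigma>. happ I H u \<sigma> + happ I H v \<sigma>)"
  unfolding happ_def mvec_def by (auto simp: sum.distrib distrib_left intro!: ext)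

lemma supp_happ: "supp I (happ I H v)" unfolding supp_def happ_def by auto

lemma pev_bound:
  assumes "degree p \<le> D"
  shows "pev I H p v = (\<lambda>\<sigma>. \<Sum>j\<le>D. coeff p j * hpw I H j v \<sigma>)"
  unfolding pev_def
proof (rule ext, rule sum.mono_neutral_left)
  fix \<sigma> show "\<forall>i\<in>{..D} - {..degree p}. coeff p i * hpw I H i v \<sigma> = 0"
    by (auto simp: coeff_eq_0)
qed (use assms in auto)

lemma pev_add: "pev I H (p + q) v = (\<lambda>\<sigma>. pev I H p v \<sigma> + pev I H q v \<sigma>)"
proof -
  define D where "D = max (degree p) (degree q)"
  have "degree (p + q) \<le> D" unfolding D_def by (rule degree_add_le) auto
  then show ?thesis
    by (simp add: pev_bound[of _ D] D_def sum.distrib distrib_right)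
qed

lemma pev_smult: "pev I H (smult r q) v = (\<lambda>\<sigma>. r * pev I H q v \<sigma>)"
  by (simp add: pev_bound[of "smult r q" "degree q"] pev_def sum_distrib_left mult_ac)

lemma pev_shift: "pev I H (pCons 0 q) v = happ I H (pev I H q v)"
proof -
  have "degree (pCons 0 q) \<le> Suc (degree q)" by (simp add: degree_pCons_le)
  then have "pev I H (pCons 0 q) v = (\<lambda>\<sigma>. \<Sum>j\<le>Suc (degree q). coeff (pCons 0 q) j * hpw I H j v \<sigma>)"
    by (rule pev_bound)
  also have "\<dots> = (\<lambda>\<sigma>. \<Sum>j\<le>degree q. coeff q j * hpw I H (Suc j) v \<sigma>)"
    by (simp only: sum.atMost_Suc_shift coeff_pCons_0 coeff_pCons_Suc) simp
  also have "\<dots> = happ I H (pev I H q v)"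
    unfolding pev_def by (subst happ_lin) (auto simp: hpw_def)
  finally show ?thesis .
qed

lemma pev_linfac: "pev I H ([:-r, 1:] * q) v = (\<lambda>\<sigma>. happ I H (pev I H q v) \<sigma> - r * pev I H q v \<sigma>)"
proof -
  have e: "[:-r, 1:] * q = smult (-r) q + pCons 0 q" by simp
  show ?thesis by (simp only: e pev_add pev_smult pev_shift) (simp add: algebra_simps)
qed

lemma pev_const: "pev I H [:a:] v = (\<lambda>\<sigma>. a * v \<sigma>)"
  unfolding pev_def hpw_def by simp

locale subsp =
  fixes I :: "conf set" and H :: op and P :: "(conf \<Rightarrow> complex) \<Rightarrow> bool"
  assumes fin: "finite I"
    and P0: "P (\<lambda>_. 0)" and Padd: "\<And>u v. P u \<Longrightarrow> P v \<Longrightarrow> P (\<lambda>\<sigma>. u \<sigma> + v \<sigma>)"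
    and Psc: "\<And>c v. P v \<Longrightarrow> P (\<lambda>\<sigma>. c * v \<sigma>)"
    and PH: "\<And>v. P v \<Longrightarrow> P (happ I H v)"
    and Psupp: "\<And>v. P v \<Longrightarrow> supp I v"
begin

lemma Psum: "finite S \<Longrightarrow> (\<And>j. j \<in> S \<Longrightarrow> P (f j)) \<Longrightarrow> P (\<lambda>\<sigma>. \<Sum>j\<in>S. f j \<sigma>)"
proof (induction S rule: finite_induct)
  case empty then show ?case using P0 by simp
next
  case (insert x F) then show ?case using Padd[of "f x" "\<lambda>\<sigma>. \<Sum>j\<in>F. f j \<sigma>"] by simp
qed

lemma Phpw: "P v \<Longrightarrow> P (hpw I H j v)"
  by (induction j) (auto simp: hpw_def PH)

lemma Ppev: "P v \<Longrightarrow> P (pev I H p v)"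
  unfolding pev_def by (rule Psum) (auto intro: Psc Phpw)

lemma root_extract:
  assumes "p \<noteq> 0" "pev I H p w = (\<lambda>_. 0)" "P w" "w \<noteq> (\<lambda>_. 0)"
  shows "\<exists>u r. P u \<and> u \<noteq> (\<lambda>_. 0) \<and> happ I H u = (\<lambda>\<sigma>. r * u \<sigma>)"
  using assms
proof (induction "degree p" arbitrary: p rule: less_induct)
  case less
  show ?case
  proof (cases "degree p = 0")
    case True
    then obtain a where pa: "p = [:a:]" by (metis degree_eq_zeroE)
    then have "a \<noteq> 0" using less.prems by auto
    moreover have "(\<lambda>\<sigma>. a * w \<sigma>) = (\<lambda>_. 0)" using less.prems pa by (simp add: pev_const)
    ultimately have "w = (\<lambda>_. 0)" by (auto simp: fun_eq_iff)
    then show ?thesis using less.prems by simp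
  next
    case False
    then have "\<not> constant (poly p)" by (simp add: constant_degree)
    from fundamental_theorem_of_algebra[OF this] obtain r where "poly p r = 0" by blast
    then obtain q where pq: "p = [:-r, 1:] * q" using poly_eq_0_iff_dvd by (metis dvdE)
    then have q0: "q \<noteq> 0" using less.prems by auto
    have dq: "degree q < degree p" unfolding pq using q0 by (subst degree_mult_eq) auto
    define u where "u = pev I H q w"
    have Pu: "P u" unfolding u_def using less.prems by (simp add: Ppev)
    have hu: "(\<lambda>\<sigma>. happ I H u \<sigma> - r * u \<sigma>) = (\<lambda>_. 0)"
      using less.prems(2) unfolding pq pev_linfac u_def .
    show ?thesis
    proof (cases "u = (\<lambda>_. 0)")
      case True
      then show ?thesis using less.hyps[OF dq q0] less.prems unfolding u_def by blast
    next
      case False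
      have "happ I H u = (\<lambda>\<sigma>. r * u \<sigma>)"
      proof
        fix \<sigma> show "happ I H u \<sigma> = r * u \<sigma>" using fun_cong[OF hu, of \<sigma>] by simp
      qed
      then show ?thesis using Pu False by blast
    qed
  qed
qed

lemma eig_exists:
  assumes "P w" "w \<noteq> (\<lambda>_. 0)"
  shows "\<exists>u r. P u \<and> u \<noteq> (\<lambda>_. 0) \<and> happ I H u = (\<lambda>\<sigma>. r * u \<sigma>)"
proof -
  have "card I < card {..card I}" by simp
  from lin_dep[OF fin _ this, of "\<lambda>j. hpw I H j w"] obtain c where
    c: "\<exists>j\<in>{..card I}. c j \<noteq> 0" "\<forall>\<sigma>\<in>I. (\<Sum>j\<le>card I. c j * hpw I H j w \<sigma>) = 0" by auto
  define p where "p = (\<Sum>j\<le>card I. monom (c j) j)"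
  have cp: "coeff p j = (if j \<le> card I then c j else 0)" for j
    unfolding p_def by (simp add: coeff_sum)
  have dp: "degree p \<le> card I" by (rule degree_le) (auto simp: cp)
  have p0: "p \<noteq> 0"
  proof -
    obtain j where "j \<le> card I" "c j \<noteq> 0" using c(1) by auto
    then show ?thesis using cp[of j] by auto
  qed
  have "pev I H p w = (\<lambda>\<sigma>. \<Sum>j\<le>card I. c j * hpw I H j w \<sigma>)"
    by (simp add: pev_bound[OF dp] cp)
  also have "\<dots> = (\<lambda>_. 0)"
  proof
    fix \<sigma> show "(\<Sum>j\<le>card I. c j * hpw I H j w \<sigma>) = 0"
    proof (cases "\<sigma> \<in> I")
      case True then show ?thesis using c(2) by simp
    next
      case False
      have "supp I (hpw I H j w)" for j using Phpw[OF assms(1)] Psupp by blast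
      then show ?thesis using False unfolding supp_def by simp
    qed
  qed
  finally show ?thesis using root_extract[OF p0 _ assms] by blast
qed

end


lemma ip_lin2: "finite S \<Longrightarrow> ip I u (\<lambda>\<sigma>. \<Sum>i\<in>S. c i * f i \<sigma>) = (\<Sum>i\<in>S. c i * ip I u (f i))"
proof -
  have "ip I u (\<lambda>\<sigma>. \<Sum>i\<in>S. c i * f i \<sigma>) = (\<Sum>\<sigma>\<in>I. \<Sum>i\<in>S. c i * (cnj (u \<sigma>) * f i \<sigma>))"
    unfolding ip_def by (simp add: sum_distrib_left mult_ac)
  also have "\<dots> = (\<Sum>i\<in>S. \<Sum>\<sigma>\<in>I. c i * (cnj (u \<sigma>) * f i \<sigma>))" by (rule sum.swap)
  also have "\<dots> = (\<Sum>i\<in>S. c i * ip I u (f i))" unfolding ip_def by (simp add: sum_distrib_left)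
  finally show ?thesis .
qed
lemma ip_add2: "ip I u (\<lambda>\<sigma>. v \<sigma> + w \<sigma>) = ip I u v + ip I u w"
  unfolding ip_def by (simp add: distrib_left sum.distrib)
lemma ip_diff2: "ip I u (\<lambda>\<sigma>. v \<sigma> - w \<sigma>) = ip I u v - ip I u w"
  unfolding ip_def by (simp add: right_diff_distrib sum_subtractf)
lemma ip_sc2: "ip I u (\<lambda>\<sigma>. c * v \<sigma>) = c * ip I u v"
  unfolding ip_def by (simp add: sum_distrib_left mult_ac)
lemma ip_sc1: "ip I (\<lambda>\<sigma>. c * v \<sigma>) w = cnj c * ip I v w"
  unfolding ip_def by (simp add: sum_distrib_left mult_ac)
lemma ip_conj: "ip I u v = cnj (ip I v u)"
  unfolding ip_def by (simp add: mult_ac)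
lemma ip_zero2: "ip I u (\<lambda>_. 0) = 0" unfolding ip_def by simp

lemma ip_herm:
  assumes "herm I H"
  shows "ip I u (happ I H v) = ip I (happ I H u) v"
proof -
  have "ip I u (happ I H v) = (\<Sum>\<sigma>\<in>I. \<Sum>\<tau>\<in>I. cnj (u \<sigma>) * H \<sigma> \<tau> * v \<tau>)"
    unfolding ip_def happ_def mvec_def by (simp add: sum_distrib_left mult_ac)
  also have "\<dots> = (\<Sum>\<tau>\<in>I. \<Sum>\<sigma>\<in>I. cnj (H \<tau> \<sigma>) * cnj (u \<sigma>) * v \<tau>)"
  proof (subst sum.swap, intro sum.cong refl)
    fix \<tau> \<sigma> assume "\<tau> \<in> I" "\<sigma> \<in> I"
    then have "H \<sigma> \<tau> = cnj (H \<tau> \<sigma>)" using assms unfolding herm_def by blast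
    then show "cnj (u \<sigma>) * H \<sigma> \<tau> * v \<tau> = cnj (H \<tau> \<sigma>) * cnj (u \<sigma>) * v \<tau>" by simp
  qed
  also have "\<dots> = ip I (happ I H u) v"
    unfolding ip_def happ_def mvec_def by (auto simp: sum_distrib_left sum_distrib_right mult_ac intro!: sum.cong)
  finally show ?thesis .
qed

lemma ip_self: "ip I u u = complex_of_real (\<Sum>\<sigma>\<in>I. (cmod (u \<sigma>))\<^sup>2)"
  unfolding ip_def of_real_sum by (rule sum.cong) (simp_all only: complex_norm_square mult.commute)

lemma ip_self_pos:
  assumes "finite I" "supp I u" "u \<noteq> (\<lambda>_. 0)"
  shows "(\<Sum>\<sigma>\<in>I. (cmod (u \<sigma>))\<^sup>2) > 0"
proof -
  obtain \<sigma> where "u \<sigma> \<noteq> 0" using assms(3) by auto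
  then have s: "\<sigma> \<in> I" using assms(2) unfolding supp_def by auto
  have "(cmod (u \<sigma>))\<^sup>2 > 0" using \<open>u \<sigma> \<noteq> 0\<close> by simp
  also have "(cmod (u \<sigma>))\<^sup>2 \<le> (\<Sum>\<sigma>\<in>I. (cmod (u \<sigma>))\<^sup>2)"
    by (rule member_le_sum) (use s assms(1) in auto)
  finally show ?thesis .
qed

lemma eig_real:
  assumes "finite I" "herm I H" "supp I u" "u \<noteq> (\<lambda>_. 0)" "happ I H u = (\<lambda>\<sigma>. r * u \<sigma>)"
  shows "r = complex_of_real (Re r)"
proof -
  have "ip I u (happ I H u) = ip I (happ I H u) u" by (rule ip_herm[OF assms(2)])
  then have "r * ip I u u = cnj r * ip I u u" unfolding assms(5) ip_sc1 ip_sc2 .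
  moreover have "ip I u u \<noteq> 0" unfolding ip_self using ip_self_pos[OF assms(1,3,4)] by (simp del: of_real_sum of_real_power)
  ultimately have "r = cnj r" by simp
  then have "Im r = Im (cnj r)" by (rule arg_cong)
  then have "Im r = 0" by simp
  then show ?thesis by (simp add: complex_eq_iff)
qed

definition fam :: "conf set \<Rightarrow> op \<Rightarrow> nat \<Rightarrow> (nat \<Rightarrow> conf \<Rightarrow> complex) \<Rightarrow> (nat \<Rightarrow> real) \<Rightarrow> bool" where
  "fam I H k e lam \<longleftrightarrow> (\<forall>i<k. supp I (e i)) \<and>
     (\<forall>i<k. \<forall>j<k. ip I (e i) (e j) = (if i = j then 1 else 0)) \<and>
     (\<forall>i<k. happ I H (e i) = (\<lambda>\<sigma>. complex_of_real (lam i) * e i \<sigma>))"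

definition compl :: "conf set \<Rightarrow> nat \<Rightarrow> (nat \<Rightarrow> conf \<Rightarrow> complex) \<Rightarrow> bool" where
  "compl I k e \<longleftrightarrow> (\<forall>v. supp I v \<longrightarrow> v = (\<lambda>\<sigma>. \<Sum>i<k. ip I (e i) v * e i \<sigma>))"

lemma fam_bound:
  assumes "finite I" "fam I H k e lam"
  shows "k \<le> card I"
proof (rule ccontr)
  assume "\<not> k \<le> card I"
  then have "card I < card {..<k}" by simp
  from lin_dep[OF assms(1) _ this, of e] obtain c where
    c: "\<exists>j\<in>{..<k}. c j \<noteq> 0" "\<forall>\<sigma>\<in>I. (\<Sum>j<k. c j * e j \<sigma>) = 0" by auto
  have "c i = 0" if "i < k" for i
  proof -
    have "ip I (e i) (\<lambda>\<sigma>. \<Sum>j<k. c j * e j \<sigma>) = (\<Sum>j<k. c j * ip I (e i) (e j))"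
      by (simp add: ip_lin2)
    also have "\<dots> = (\<Sum>j<k. if j = i then c j else 0)"
      using assms(2) that unfolding fam_def by (intro sum.cong refl) auto
    also have "\<dots> = c i" using that by simp
    finally have "c i = ip I (e i) (\<lambda>\<sigma>. \<Sum>j<k. c j * e j \<sigma>)" by simp
    also have "\<dots> = 0" unfolding ip_def using c(2) by simp
    finally show ?thesis .
  qed
  then show False using c(1) by auto
qed

lemma fam_step:
  assumes fin: "finite I" and hH: "herm I H" and F: "fam I H k e lam" and nc: "\<not> compl I k e"
  shows "\<exists>e' lam'. fam I H (Suc k) e' lam'"
proof -
  obtain v where v: "supp I v" "v \<noteq> (\<lambda>\<sigma>. \<Sum>i<k. ip I (e i) v * e i \<sigma>)"
    using nc unfolding compl_def by auto
  define w where "w = (\<lambda>\<sigma>. v \<sigma> - (\<Sum>i<k. ip I (e i) v * e i \<sigma>))"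
  define P where "P = (\<lambda>x. supp I x \<and> (\<forall>i<k. ip I (e i) x = 0))"
  have orth: "\<forall>i<k. \<forall>j<k. ip I (e i) (e j) = (if i = j then 1 else 0)"
    and eig: "\<forall>i<k. happ I H (e i) = (\<lambda>\<sigma>. complex_of_real (lam i) * e i \<sigma>)"
    and sp: "\<forall>i<k. supp I (e i)" using F unfolding fam_def by auto
  have w0: "w \<noteq> (\<lambda>_. 0)" using v(2) unfolding w_def by (auto simp: fun_eq_iff)
  have Pw: "P w"
  proof -
    have "supp I w" using v(1) sp unfolding w_def supp_def by auto
    moreover have "ip I (e j) w = 0" if "j < k" for j
    proof -
      have "ip I (e j) w = ip I (e j) v - (\<Sum>i<k. ip I (e i) v * ip I (e j) (e i))"
        unfolding w_def ip_diff2 by (simp add: ip_lin2)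
      also have "(\<Sum>i<k. ip I (e i) v * ip I (e j) (e i)) = (\<Sum>i<k. if i = j then ip I (e i) v else 0)"
        using orth that by (intro sum.cong refl) auto
      finally show ?thesis using that by simp
    qed
    ultimately show ?thesis unfolding P_def by auto
  qed
  interpret subsp I H P
  proof
    show "finite I" by fact
    show "P (\<lambda>_. 0)" unfolding P_def supp_def by (simp add: ip_zero2)
    show "P (\<lambda>\<sigma>. u \<sigma> + v \<sigma>)" if "P u" "P v" for u v
      using that unfolding P_def supp_def by (simp add: ip_add2)
    show "P (\<lambda>\<sigma>. c * v \<sigma>)" if "P v" for c v
      using that unfolding P_def supp_def by (simp add: ip_sc2)
    show "P (happ I H v)" if "P v" for v
    proof -
      have "ip I (e i) (happ I H v) = 0" if "i < k" for i
        using \<open>P v\<close> that eig unfolding ip_herm[OF hH] P_def by (simp add: ip_sc1)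
      then show ?thesis unfolding P_def using supp_happ by auto
    qed
    show "supp I v" if "P v" for v using that unfolding P_def by auto
  qed
  obtain u r where u: "P u" "u \<noteq> (\<lambda>_. 0)" "happ I H u = (\<lambda>\<sigma>. r * u \<sigma>)"
    using eig_exists[OF Pw w0] by blast
  have su: "supp I u" using u(1) unfolding P_def by auto
  have rr: "r = complex_of_real (Re r)" by (rule eig_real[OF fin hH su u(2,3)])
  define s where "s = (\<Sum>\<sigma>\<in>I. (cmod (u \<sigma>))\<^sup>2)"
  have s0: "s > 0" unfolding s_def by (rule ip_self_pos[OF fin su u(2)])
  define a where "a = complex_of_real (1 / sqrt s)"
  define e1 where "e1 = (\<lambda>\<sigma>. a * u \<sigma>)"
  have e1e1: "ip I e1 e1 = 1"
  proof -
    have "ip I e1 e1 = cnj a * a * ip I u u" unfolding e1_def ip_sc1 ip_sc2 by simp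
    also have "\<dots> = complex_of_real ((1 / sqrt s) * (1 / sqrt s) * s)"
      unfolding ip_self a_def s_def[symmetric] by (simp only: of_real_mult complex_cnj_complex_of_real)
    also have "(1 / sqrt s) * (1 / sqrt s) * s = 1" using s0
      by (simp add: field_simps flip: power2_eq_square)
    finally show "ip I e1 e1 = 1" by simp
  qed
  have e1ei: "ip I (e i) e1 = 0" if "i < k" for i
    unfolding e1_def ip_sc2 using u(1) that unfolding P_def by simp
  have e1H: "happ I H e1 = (\<lambda>\<sigma>. complex_of_real (Re r) * e1 \<sigma>)"
  proof -
    have "complex_of_real (Re r) = r" using rr by simp
    then show ?thesis unfolding e1_def happ_sc u(3) by (simp add: mult_ac)
  qed
  have e1s: "supp I e1" using su unfolding e1_def supp_def by simp
  have "fam I H (Suc k) (e(k := e1)) (lam(k := Re r))"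
    unfolding fam_def
  proof (intro conjI allI impI)
    fix i assume "i < Suc k"
    then show "supp I ((e(k := e1)) i)" using sp e1s by (cases "i = k") auto
  next
    fix i j assume ij: "i < Suc k" "j < Suc k"
    show "ip I ((e(k := e1)) i) ((e(k := e1)) j) = (if i = j then 1 else 0)"
    proof (cases "i = k"; cases "j = k")
      assume "i = k" "j \<noteq> k" then show ?thesis using e1ei[of j] ij ip_conj[of I e1 "e j"] by simp
    next
      assume "i \<noteq> k" "j = k" then show ?thesis using e1ei[of i] ij by simp
    next
      assume "i \<noteq> k" "j \<noteq> k" then show ?thesis using orth ij by simp
    qed (use e1e1 in simp)
  next
    fix i assume "i < Suc k"
    then show "happ I H ((e(k := e1)) i) = (\<lambda>\<sigma>. complex_of_real ((lam(k := Re r)) i) * (e(k := e1)) i \<sigma>)"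
      using eig e1H by (cases "i = k") simp_all
  qed
  then show ?thesis by blast
qed

lemma spectral:
  assumes fin: "finite I" and hH: "herm I H"
  shows "\<exists>m e lam. fam I H m e lam \<and> compl I m e"
proof -
  have "(\<exists>m e lam. fam I H m e lam \<and> compl I m e) \<or> (\<exists>e lam. fam I H k e lam)" for k
  proof (induction k)
    case 0 then show ?case unfolding fam_def by auto
  next
    case (Suc k)
    then show ?case using fam_step[OF fin hH] by blast
  qed
  moreover have "\<not> fam I H (Suc (card I)) e lam" for e lam
    using fam_bound[OF fin, of H "Suc (card I)" e lam] by linarith
  ultimately show ?thesis by blast
qed


definition Fop :: "conf set \<Rightarrow> nat \<Rightarrow> (nat \<Rightarrow> conf \<Rightarrow> complex) \<Rightarrow> (nat \<Rightarrow> real) \<Rightarrow> (real \<Rightarrow> real) \<Rightarrow> op" where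
  "Fop I m e lam f = (\<lambda>\<sigma> \<tau>. if \<sigma> \<in> I \<and> \<tau> \<in> I then (\<Sum>i<m. complex_of_real (f (lam i)) * e i \<sigma> * cnj (e i \<tau>)) else 0)"

definition me :: "conf set \<Rightarrow> (nat \<Rightarrow> conf \<Rightarrow> complex) \<Rightarrow> op \<Rightarrow> nat \<Rightarrow> nat \<Rightarrow> complex" where
  "me I e X j k = ip I (e j) (happ I X (e k))"

lemma ip_adj: "ip I u (happ I (madj X) v) = ip I (happ I X u) v"
proof -
  have "ip I u (happ I (madj X) v) = (\<Sum>\<sigma>\<in>I. \<Sum>\<tau>\<in>I. cnj (u \<sigma>) * cnj (X \<tau> \<sigma>) * v \<tau>)"
    unfolding ip_def happ_def mvec_def madj_def by (simp add: sum_distrib_left mult_ac)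
  also have "\<dots> = (\<Sum>\<tau>\<in>I. \<Sum>\<sigma>\<in>I. cnj (u \<sigma>) * cnj (X \<tau> \<sigma>) * v \<tau>)" by (rule sum.swap)
  also have "\<dots> = ip I (happ I X u) v"
    unfolding ip_def happ_def mvec_def by (auto simp: sum_distrib_left sum_distrib_right mult_ac intro!: sum.cong)
  finally show ?thesis .
qed

lemma happ_mmul: "happ I (mmul I X Y) v = happ I X (happ I Y v)"
proof
  fix \<sigma>
  show "happ I (mmul I X Y) v \<sigma> = happ I X (happ I Y v) \<sigma>"
  proof (cases "\<sigma> \<in> I")
    case True
    have "happ I (mmul I X Y) v \<sigma> = (\<Sum>\<tau>\<in>I. \<Sum>\<rho>\<in>I. X \<sigma> \<rho> * Y \<rho> \<tau> * v \<tau>)"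
      using True unfolding happ_def mvec_def mmul_def by (simp add: sum_distrib_right)
    also have "\<dots> = (\<Sum>\<rho>\<in>I. \<Sum>\<tau>\<in>I. X \<sigma> \<rho> * Y \<rho> \<tau> * v \<tau>)" by (rule sum.swap)
    also have "\<dots> = happ I X (happ I Y v) \<sigma>"
      using True unfolding happ_def mvec_def by (auto simp: sum_distrib_left mult_ac intro!: sum.cong)
    finally show ?thesis .
  qed (simp add: happ_def)
qed

lemma happ_msub: "happ I (msub X Y) v = (\<lambda>\<sigma>. happ I X v \<sigma> - happ I Y v \<sigma>)"
  unfolding happ_def mvec_def msub_def by (auto simp: left_diff_distrib sum_subtractf)
lemma happ_madd: "happ I (madd X Y) v = (\<lambda>\<sigma>. happ I X v \<sigma> + happ I Y v \<sigma>)"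
  unfolding happ_def mvec_def madd_def by (auto simp: distrib_right sum.distrib)
lemma happ_mscale: "happ I (mscale c X) v = (\<lambda>\<sigma>. c * happ I X v \<sigma>)"
  unfolding happ_def mvec_def mscale_def by (auto simp: sum_distrib_left mult_ac)
lemma sum_delta_mul: "finite I \<Longrightarrow> \<sigma> \<in> I \<Longrightarrow> (\<Sum>\<tau>\<in>I. (if \<sigma> = \<tau> then 1 else 0) * (v \<tau>::complex)) = v \<sigma>"
proof -
  assume a: "finite I" "\<sigma> \<in> I"
  have "(\<Sum>\<tau>\<in>I. (if \<sigma> = \<tau> then 1 else 0) * v \<tau>) = (\<Sum>\<tau>\<in>I. if \<tau> = \<sigma> then v \<tau> else 0)"
    by (rule sum.cong) auto
  also have "\<dots> = v \<sigma>" using a by simp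
  finally show ?thesis .
qed

lemma happ_mid: "finite I \<Longrightarrow> supp I v \<Longrightarrow> happ I mid v = v"
proof (rule ext)
  fix \<sigma> assume "finite I" "supp I v"
  then show "happ I mid v \<sigma> = v \<sigma>"
    unfolding happ_def mvec_def mid_def supp_def by (cases "\<sigma> \<in> I") (simp_all add: sum_delta_mul)
qed

lemma me_msub: "me I e (msub X Y) j k = me I e X j k - me I e Y j k"
  unfolding me_def happ_msub ip_diff2 ..
lemma me_madd: "me I e (madd X Y) j k = me I e X j k + me I e Y j k"
  unfolding me_def happ_madd ip_add2 ..
lemma me_mscale: "me I e (mscale c X) j k = c * me I e X j k"
  unfolding me_def happ_mscale ip_sc2 ..
lemma me_madj: "me I e (madj X) j k = cnj (me I e X k j)"
  unfolding me_def ip_adj by (subst ip_conj) simp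

locale sdata =
  fixes I :: "conf set" and H :: op and m :: nat and e :: "nat \<Rightarrow> conf \<Rightarrow> complex" and lam :: "nat \<Rightarrow> real"
  assumes fin: "finite I" and hH: "herm I H" and F: "fam I H m e lam" and C: "compl I m e"
begin

lemma sp: "i < m \<Longrightarrow> supp I (e i)" using F unfolding fam_def by auto
lemma orth: "i < m \<Longrightarrow> j < m \<Longrightarrow> ip I (e i) (e j) = (if i = j then 1 else 0)" using F unfolding fam_def by auto
lemma eig: "i < m \<Longrightarrow> happ I H (e i) = (\<lambda>\<sigma>. complex_of_real (lam i) * e i \<sigma>)" using F unfolding fam_def by auto

lemma expand: "supp I v \<Longrightarrow> v = (\<lambda>\<sigma>. \<Sum>i<m. ip I (e i) v * e i \<sigma>)" using C unfolding compl_def by auto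

lemma complete:
  assumes "\<sigma> \<in> I" "\<tau> \<in> I"
  shows "(\<Sum>i<m. e i \<sigma> * cnj (e i \<tau>)) = (if \<sigma> = \<tau> then 1 else 0)"
proof -
  define v where "v = (\<lambda>x. if x = \<tau> then (1::complex) else 0)"
  have "supp I v" unfolding v_def supp_def using assms by auto
  from fun_cong[OF expand[OF this], of \<sigma>]
  have "v \<sigma> = (\<Sum>i<m. ip I (e i) v * e i \<sigma>)" .
  moreover have "ip I (e i) v = cnj (e i \<tau>)" for i
    unfolding ip_def v_def using fin assms by (simp add: if_distrib cong: if_cong)
  ultimately show ?thesis unfolding v_def by (simp add: mult.commute)
qed

lemma ev_rel:
  assumes "eigvec I H \<mu> v" "i < m"
  shows "ip I (e i) v = 0 \<or> lam i = \<mu>"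
proof -
  have sv: "supp I v" using assms(1) unfolding eigvec_def supp_def by auto
  have hv: "happ I H v = (\<lambda>\<sigma>. complex_of_real \<mu> * v \<sigma>)"
    using assms(1) unfolding eigvec_def happ_def by (auto simp: fun_eq_iff)
  have "complex_of_real \<mu> * ip I (e i) v = ip I (e i) (happ I H v)" unfolding hv ip_sc2 ..
  also have "\<dots> = ip I (happ I H (e i)) v" by (rule ip_herm[OF hH])
  also have "\<dots> = complex_of_real (lam i) * ip I (e i) v" unfolding eig[OF assms(2)] ip_sc1 by simp
  finally show ?thesis by auto
qed

lemma eigvec_e: "i < m \<Longrightarrow> eigvec I H (lam i) (e i)"
proof -
  assume i: "i < m"
  have "\<exists>\<sigma>\<in>I. e i \<sigma> \<noteq> 0"
  proof (rule ccontr)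
    assume "\<not> ?thesis"
    then have "ip I (e i) (e i) = 0" unfolding ip_def by simp
    then show False using orth[OF i i] by simp
  qed
  moreover have "mvec I H (e i) \<sigma> = complex_of_real (lam i) * e i \<sigma>" if "\<sigma> \<in> I" for \<sigma>
    using fun_cong[OF eig[OF i], of \<sigma>] that unfolding happ_def by simp
  ultimately show ?thesis using sp[OF i] unfolding eigvec_def supp_def by auto
qed

lemma Fop_prop:
  assumes "eigvec I H \<mu> v" "\<sigma> \<in> I"
  shows "mvec I (Fop I m e lam f) v \<sigma> = complex_of_real (f \<mu>) * v \<sigma>"
proof -
  have sv: "supp I v" using assms(1) unfolding eigvec_def supp_def by auto
  have "mvec I (Fop I m e lam f) v \<sigma> = (\<Sum>\<tau>\<in>I. \<Sum>i<m. complex_of_real (f (lam i)) * e i \<sigma> * (cnj (e i \<tau>) * v \<tau>))"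
    unfolding mvec_def Fop_def using assms(2) by (simp add: sum_distrib_right sum_distrib_left mult_ac)
  also have "\<dots> = (\<Sum>i<m. \<Sum>\<tau>\<in>I. complex_of_real (f (lam i)) * e i \<sigma> * (cnj (e i \<tau>) * v \<tau>))"
    by (rule sum.swap)
  also have "\<dots> = (\<Sum>i<m. complex_of_real (f (lam i)) * e i \<sigma> * ip I (e i) v)"
    unfolding ip_def by (simp add: sum_distrib_left)
  also have "\<dots> = (\<Sum>i<m. complex_of_real (f \<mu>) * (ip I (e i) v * e i \<sigma>))"
    by (rule sum.cong) (use ev_rel[OF assms(1)] in auto)
  also have "\<dots> = complex_of_real (f \<mu>) * v \<sigma>"
    by (subst (2) expand[OF sv]) (simp add: sum_distrib_left)
  finally show ?thesis .
qed

lemma fcalc_eq: "fcalc I H f = Fop I m e lam f"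
  unfolding fcalc_def
proof (rule the_equality)
  show "(\<forall>\<sigma> \<tau>. \<sigma> \<notin> I \<or> \<tau> \<notin> I \<longrightarrow> Fop I m e lam f \<sigma> \<tau> = 0) \<and>
    (\<forall>\<mu> v. eigvec I H \<mu> v \<longrightarrow> (\<forall>\<sigma>\<in>I. mvec I (Fop I m e lam f) v \<sigma> = complex_of_real (f \<mu>) * v \<sigma>))"
    using Fop_prop unfolding Fop_def by auto
next
  fix M assume M: "(\<forall>\<sigma> \<tau>. \<sigma> \<notin> I \<or> \<tau> \<notin> I \<longrightarrow> M \<sigma> \<tau> = 0) \<and>
    (\<forall>\<mu> v. eigvec I H \<mu> v \<longrightarrow> (\<forall>\<sigma>\<in>I. mvec I M v \<sigma> = complex_of_real (f \<mu>) * v \<sigma>))"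
  show "M = Fop I m e lam f"
  proof (intro ext)
    fix \<sigma> \<tau>
    show "M \<sigma> \<tau> = Fop I m e lam f \<sigma> \<tau>"
    proof (cases "\<sigma> \<in> I \<and> \<tau> \<in> I")
      case True
      have "M \<sigma> \<tau> = (\<Sum>\<rho>\<in>I. M \<sigma> \<rho> * (if \<rho> = \<tau> then 1 else 0))"
        using True fin by (simp add: if_distrib cong: if_cong)
      also have "\<dots> = (\<Sum>\<rho>\<in>I. \<Sum>i<m. M \<sigma> \<rho> * e i \<rho> * cnj (e i \<tau>))"
      proof (rule sum.cong[OF refl])
        fix \<rho> assume r: "\<rho> \<in> I"
        have "M \<sigma> \<rho> * (if \<rho> = \<tau> then 1 else 0) = M \<sigma> \<rho> * (\<Sum>i<m. e i \<rho> * cnj (e i \<tau>))"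
          using complete[OF r] True by simp
        then show "M \<sigma> \<rho> * (if \<rho> = \<tau> then 1 else 0) = (\<Sum>i<m. M \<sigma> \<rho> * e i \<rho> * cnj (e i \<tau>))"
          by (simp add: sum_distrib_left mult_ac)
      qed
      also have "\<dots> = (\<Sum>i<m. \<Sum>\<rho>\<in>I. M \<sigma> \<rho> * e i \<rho> * cnj (e i \<tau>))" by (rule sum.swap)
      also have "\<dots> = (\<Sum>i<m. mvec I M (e i) \<sigma> * cnj (e i \<tau>))"
        unfolding mvec_def by (simp add: sum_distrib_right)
      also have "\<dots> = (\<Sum>i<m. complex_of_real (f (lam i)) * e i \<sigma> * cnj (e i \<tau>))"
        by (rule sum.cong) (use M eigvec_e True in auto)
      finally show ?thesis unfolding Fop_def using True by simp
    next
      case False then show ?thesis using M unfolding Fop_def by auto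
    qed
  qed
qed

lemma me_mmul: "me I e (mmul I X Y) j k = (\<Sum>l<m. me I e X j l * me I e Y l k)" if "k < m"
proof -
  have "happ I Y (e k) = (\<lambda>\<sigma>. \<Sum>l<m. me I e Y l k * e l \<sigma>)"
    unfolding me_def by (rule expand[OF supp_happ])
  then have "me I e (mmul I X Y) j k = ip I (e j) (happ I X (\<lambda>\<sigma>. \<Sum>l<m. me I e Y l k * e l \<sigma>))"
    unfolding me_def happ_mmul by simp
  also have "\<dots> = (\<Sum>l<m. me I e Y l k * me I e X j l)"
    unfolding happ_lin[OF finite_lessThan] ip_lin2[OF finite_lessThan] me_def ..
  finally show ?thesis by (simp add: mult.commute)
qed

lemma mtr_me: "mtr I X = (\<Sum>k<m. me I e X k k)"
proof -
  have "(\<Sum>k<m. me I e X k k) = (\<Sum>k<m. \<Sum>\<sigma>\<in>I. \<Sum>\<tau>\<in>I. X \<sigma> \<tau> * (e k \<tau> * cnj (e k \<sigma>)))"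
    unfolding me_def ip_def happ_def mvec_def by (auto simp: sum_distrib_left mult_ac intro!: sum.cong)
  also have "\<dots> = (\<Sum>\<sigma>\<in>I. \<Sum>k<m. \<Sum>\<tau>\<in>I. X \<sigma> \<tau> * (e k \<tau> * cnj (e k \<sigma>)))" by (rule sum.swap)
  also have "\<dots> = (\<Sum>\<sigma>\<in>I. \<Sum>\<tau>\<in>I. \<Sum>k<m. X \<sigma> \<tau> * (e k \<tau> * cnj (e k \<sigma>)))" by (auto intro!: sum.cong sum.swap)
  also have "\<dots> = (\<Sum>\<sigma>\<in>I. \<Sum>\<tau>\<in>I. X \<sigma> \<tau> * (if \<tau> = \<sigma> then 1 else 0))"
    by (auto simp: complete simp flip: sum_distrib_left intro!: sum.cong)
  also have "\<dots> = mtr I X" unfolding mtr_def using fin by (simp add: if_distrib cong: if_cong)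
  finally show ?thesis by simp
qed

lemma me_diag:
  assumes "\<And>i. i < m \<Longrightarrow> happ I M (e i) = (\<lambda>\<sigma>. c i * e i \<sigma>)" "j < m" "k < m"
  shows "me I e M j k = (if j = k then c k else 0)"
  unfolding me_def assms(1)[OF assms(3)] ip_sc2 orth[OF assms(2,3)] by simp

lemma happ_Fop: "k < m \<Longrightarrow> happ I (Fop I m e lam f) (e k) = (\<lambda>\<sigma>. complex_of_real (f (lam k)) * e k \<sigma>)"
  using Fop_prop[OF eigvec_e] sp unfolding happ_def supp_def by (auto simp: fun_eq_iff)

lemma me_Fop: "j < m \<Longrightarrow> k < m \<Longrightarrow> me I e (Fop I m e lam f) j k = (if j = k then complex_of_real (f (lam k)) else 0)"
  by (rule me_diag[OF happ_Fop])

lemma me_H: "j < m \<Longrightarrow> k < m \<Longrightarrow> me I e H j k = (if j = k then complex_of_real (lam k) else 0)"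
  by (rule me_diag[OF eig])

lemma me_mid: "j < m \<Longrightarrow> k < m \<Longrightarrow> me I e mid j k = (if j = k then 1 else 0)"
  using me_diag[of mid "\<lambda>_. 1"] happ_mid[OF fin sp] by simp

lemma spec_eq: "spec I H = lam ` {..<m}"
proof
  show "lam ` {..<m} \<subseteq> spec I H" unfolding spec_def using eigvec_e by blast
next
  show "spec I H \<subseteq> lam ` {..<m}"
  proof
    fix \<mu> assume "\<mu> \<in> spec I H"
    then obtain v where v: "eigvec I H \<mu> v" unfolding spec_def by auto
    have sv: "supp I v" using v unfolding eigvec_def supp_def by auto
    obtain \<sigma> where "v \<sigma> \<noteq> 0" using v unfolding eigvec_def by auto
    then obtain i where "i < m" "ip I (e i) v \<noteq> 0"
      using fun_cong[OF expand[OF sv], of \<sigma>] by (metis (no_types, lifting) mult_eq_0_iff sum.neutral lessThan_iff)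
    then show "\<mu> \<in> lam ` {..<m}" using ev_rel[OF v] by auto
  qed
qed

lemma m_pos: "I \<noteq> {} \<Longrightarrow> m > 0"
proof (rule ccontr)
  assume "I \<noteq> {}" "\<not> m > 0"
  then obtain \<sigma> where "\<sigma> \<in> I" by auto
  from complete[OF this this] \<open>\<not> m > 0\<close> show False by simp
qed

end


lemma two_term_cs:
  fixes u1 u2 v1 v2 :: real
  shows "u1 * v1 + u2 * v2 \<le> sqrt (u1\<^sup>2 + u2\<^sup>2) * sqrt (v1\<^sup>2 + v2\<^sup>2)"
proof -
  have "(u1 * v1 + u2 * v2)\<^sup>2 \<le> (u1\<^sup>2 + u2\<^sup>2) * (v1\<^sup>2 + v2\<^sup>2)"
  proof -
    have "(u1\<^sup>2 + u2\<^sup>2) * (v1\<^sup>2 + v2\<^sup>2) - (u1 * v1 + u2 * v2)\<^sup>2 = (u1 * v2 - u2 * v1)\<^sup>2"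
      by (simp add: power2_eq_square algebra_simps)
    then show ?thesis by (metis diff_ge_0_iff_ge zero_le_power2)
  qed
  then have "u1 * v1 + u2 * v2 \<le> sqrt ((u1\<^sup>2 + u2\<^sup>2) * (v1\<^sup>2 + v2\<^sup>2))"
    using real_le_rsqrt by blast
  then show ?thesis by (simp add: real_sqrt_mult)
qed

lemma cs_sqrt:
  fixes f g :: "'a \<Rightarrow> real"
  assumes "\<And>i. i \<in> S \<Longrightarrow> 0 \<le> f i" "\<And>i. i \<in> S \<Longrightarrow> 0 \<le> g i"
  shows "(\<Sum>i\<in>S. sqrt (f i) * sqrt (g i))\<^sup>2 \<le> (\<Sum>i\<in>S. f i) * (\<Sum>i\<in>S. g i)"
proof -
  have "(\<Sum>i\<in>S. sqrt (f i) * sqrt (g i))\<^sup>2 \<le> (\<Sum>i\<in>S. (sqrt (f i))\<^sup>2) * (\<Sum>i\<in>S. (sqrt (g i))\<^sup>2)"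
    by (rule Cauchy_Schwarz_ineq_sum)
  also have "\<dots> = (\<Sum>i\<in>S. f i) * (\<Sum>i\<in>S. g i)" using assms by simp
  finally show ?thesis .
qed

lemma young_eps:
  fixes h \<epsilon> :: real
  assumes "h > 0" "0 < \<epsilon>" "\<epsilon> < 1/2"
  shows "h powr (1 - 2 * \<epsilon>) \<le> h + 2 * \<epsilon>"
proof -
  have "h powr (1 - 2 * \<epsilon>) * 1 powr (2 * \<epsilon>) \<le> (1 - 2 * \<epsilon>) * h + (2 * \<epsilon>) * 1"
    by (rule Youngs_inequality_0) (use assms in auto)
  then have "h powr (1 - 2 * \<epsilon>) \<le> (1 - 2 * \<epsilon>) * h + 2 * \<epsilon>" by simp
  moreover have "(1 - 2 * \<epsilon>) * h \<le> h" using assms by (simp add: algebra_simps)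
  ultimately show ?thesis by linarith
qed

lemma num_ineq:
  fixes G E :: "nat set" and h :: "nat \<Rightarrow> real" and c a :: "nat \<Rightarrow> nat \<Rightarrow> complex" and \<epsilon> :: real
  assumes fG: "finite G" and fE: "finite E" and GE: "G \<inter> E = {}"
    and hE: "\<And>l. l \<in> E \<Longrightarrow> h l > 0" and hG: "\<And>l. l \<in> G \<Longrightarrow> h l = 0"
    and eps: "0 < \<epsilon>" "\<epsilon> < 1/2"
  defines "U \<equiv> G \<union> E"
  shows "(cmod (\<Sum>k\<in>G. \<Sum>l\<in>U. c k l * a l k - a k l * c l k))\<^sup>2
    \<le> sqrt (\<Sum>k\<in>G. \<Sum>l\<in>U. inverse (h l) * ((cmod (c k l))\<^sup>2 + (cmod (c l k))\<^sup>2))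
      * sqrt (2 * \<epsilon> * (\<Sum>k\<in>G. \<Sum>l\<in>U. (cmod (c k l))\<^sup>2 + (cmod (c l k))\<^sup>2)
              + (\<Sum>k\<in>G. \<Sum>l\<in>U. h l * ((cmod (c k l))\<^sup>2 + (cmod (c l k))\<^sup>2)))
      * (\<Sum>k\<in>G. \<Sum>l\<in>U. h l powr \<epsilon> * ((cmod (a k l))\<^sup>2 + (cmod (a l k))\<^sup>2))"
proof -
  define w where "w = (\<lambda>k l. (cmod (c k l))\<^sup>2 + (cmod (c l k))\<^sup>2)"
  define z where "z = (\<lambda>k l. (cmod (a k l))\<^sup>2 + (cmod (a l k))\<^sup>2)"
  have w0: "w k l \<ge> 0" for k l unfolding w_def by simp
  have z0: "z k l \<ge> 0" for k l unfolding z_def by simp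
  define P where "P = G \<times> E"
  have fP: "finite P" unfolding P_def using fG fE by simp
  have hP: "h (snd p) > 0" if "p \<in> P" for p using that hE unfolding P_def by auto
  \<comment> \<open>Step 1: ground-ground terms cancel\<close>
  define t where "t = (\<lambda>k l. c k l * a l k - a k l * c l k)"
  have GG: "(\<Sum>k\<in>G. \<Sum>l\<in>G. t k l) = 0"
  proof -
    have "(\<Sum>k\<in>G. \<Sum>l\<in>G. t k l) = (\<Sum>k\<in>G. \<Sum>l\<in>G. c k l * a l k) - (\<Sum>k\<in>G. \<Sum>l\<in>G. a k l * c l k)"
      unfolding t_def by (simp add: sum_subtractf)
    also have "(\<Sum>k\<in>G. \<Sum>l\<in>G. a k l * c l k) = (\<Sum>l\<in>G. \<Sum>k\<in>G. a k l * c l k)" by (rule sum.swap)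
    finally show ?thesis by (simp add: mult.commute)
  qed
  have T: "(\<Sum>k\<in>G. \<Sum>l\<in>U. t k l) = (\<Sum>p\<in>P. t (fst p) (snd p))"
  proof -
    have "(\<Sum>k\<in>G. \<Sum>l\<in>U. t k l) = (\<Sum>k\<in>G. (\<Sum>l\<in>G. t k l) + (\<Sum>l\<in>E. t k l))"
      unfolding U_def using fG fE GE by (simp add: sum.union_disjoint)
    also have "\<dots> = (\<Sum>k\<in>G. \<Sum>l\<in>E. t k l)" using GG by (simp add: sum.distrib)
    also have "\<dots> = (\<Sum>p\<in>P. t (fst p) (snd p))" unfolding P_def by (simp add: sum.cartesian_product case_prod_unfold)
    finally show ?thesis .
  qed
  define f1 where "f1 = (\<lambda>p. h (snd p) powr (-\<epsilon>) * w (fst p) (snd p))"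
  define g1 where "g1 = (\<lambda>p. h (snd p) powr \<epsilon> * z (fst p) (snd p))"
  have tb: "cmod (t (fst p) (snd p)) \<le> sqrt (f1 p) * sqrt (g1 p)" if "p \<in> P" for p
  proof -
    obtain k l where p: "p = (k, l)" by (cases p)
    have hl: "h l > 0" using hP[OF that] p by simp
    define \<alpha> where "\<alpha> = h l powr (-\<epsilon>/2)"
    define \<beta> where "\<beta> = h l powr (\<epsilon>/2)"
    have ab: "\<alpha> * \<beta> = 1" unfolding \<alpha>_def \<beta>_def using hl by (simp add: powr_add[symmetric])
    have a2: "\<alpha>\<^sup>2 = h l powr (-\<epsilon>)" unfolding \<alpha>_def using hl by (simp add: powr_powr[symmetric] powr_add[symmetric] power2_eq_square)
    have b2: "\<beta>\<^sup>2 = h l powr \<epsilon>" unfolding \<beta>_def using hl by (simp add: powr_add[symmetric] power2_eq_square)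
    have a0: "\<alpha> \<ge> 0" "\<beta> \<ge> 0" unfolding \<alpha>_def \<beta>_def by auto
    have "cmod (t k l) \<le> cmod (c k l) * cmod (a l k) + cmod (a k l) * cmod (c l k)"
      unfolding t_def by (metis norm_mult norm_triangle_ineq4)
    also have "\<dots> = (\<alpha> * cmod (c k l)) * (\<beta> * cmod (a l k)) + (\<alpha> * cmod (c l k)) * (\<beta> * cmod (a k l))"
      by (simp add: mult.assoc[symmetric] mult.commute[of _ \<beta>] ab) (simp add: algebra_simps ab mult.assoc[symmetric])
    also have "\<dots> \<le> sqrt ((\<alpha> * cmod (c k l))\<^sup>2 + (\<alpha> * cmod (c l k))\<^sup>2) * sqrt ((\<beta> * cmod (a l k))\<^sup>2 + (\<beta> * cmod (a k l))\<^sup>2)"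
      by (rule two_term_cs)
    also have "(\<alpha> * cmod (c k l))\<^sup>2 + (\<alpha> * cmod (c l k))\<^sup>2 = f1 p"
      unfolding f1_def w_def p using a2 by (simp add: power_mult_distrib algebra_simps)
    also have "(\<beta> * cmod (a l k))\<^sup>2 + (\<beta> * cmod (a k l))\<^sup>2 = g1 p"
      unfolding g1_def z_def p using b2 by (simp add: power_mult_distrib algebra_simps)
    finally show ?thesis unfolding p by simp
  qed
  have f10: "f1 p \<ge> 0" for p unfolding f1_def using w0 by simp
  have g10: "g1 p \<ge> 0" for p unfolding g1_def using z0 by simp
  define S where "S = (\<Sum>p\<in>P. sqrt (f1 p) * sqrt (g1 p))"
  have S0: "S \<ge> 0" unfolding S_def by (rule sum_nonneg) (use f10 g10 in simp)
  have TS: "cmod (\<Sum>p\<in>P. t (fst p) (snd p)) \<le> S"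
    unfolding S_def by (rule order_trans[OF norm_sum sum_mono]) (use tb in auto)
  have SS: "S\<^sup>2 \<le> (\<Sum>p\<in>P. f1 p) * (\<Sum>p\<in>P. g1 p)"
    unfolding S_def by (rule cs_sqrt) (use f10 g10 in auto)
  define Y where "Y = (\<Sum>k\<in>G. \<Sum>l\<in>U. h l powr \<epsilon> * ((cmod (a k l))\<^sup>2 + (cmod (a l k))\<^sup>2))"
  have gY: "(\<Sum>p\<in>P. g1 p) \<le> Y"
  proof -
    have "(\<Sum>p\<in>P. g1 p) = (\<Sum>k\<in>G. \<Sum>l\<in>E. h l powr \<epsilon> * z k l)"
      unfolding P_def g1_def by (simp add: sum.cartesian_product case_prod_unfold)
    also have "\<dots> \<le> (\<Sum>k\<in>G. \<Sum>l\<in>U. h l powr \<epsilon> * z k l)"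
      by (rule sum_mono, rule sum_mono2) (use fG fE z0 in \<open>auto simp: U_def\<close>)
    finally show ?thesis unfolding Y_def z_def .
  qed
  define D where "D = (\<Sum>k\<in>G. \<Sum>l\<in>U. inverse (h l) * ((cmod (c k l))\<^sup>2 + (cmod (c l k))\<^sup>2))"
  define W where "W = 2 * \<epsilon> * (\<Sum>k\<in>G. \<Sum>l\<in>U. (cmod (c k l))\<^sup>2 + (cmod (c l k))\<^sup>2)
              + (\<Sum>k\<in>G. \<Sum>l\<in>U. h l * ((cmod (c k l))\<^sup>2 + (cmod (c l k))\<^sup>2))"
  define f2 where "f2 = (\<lambda>p. inverse (h (snd p)) * w (fst p) (snd p))"
  define g2 where "g2 = (\<lambda>p. h (snd p) powr (1 - 2 * \<epsilon>) * w (fst p) (snd p))"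
  have f2g2: "f1 p = sqrt (f2 p) * sqrt (g2 p)" if "p \<in> P" for p
  proof -
    have hl: "h (snd p) > 0" using hP[OF that] .
    have "sqrt (f2 p) * sqrt (g2 p) = sqrt (f2 p * g2 p)" by (simp add: real_sqrt_mult)
    also have "f2 p * g2 p = (h (snd p) powr (-\<epsilon>) * w (fst p) (snd p))\<^sup>2"
    proof -
      have "inverse (h (snd p)) * h (snd p) powr (1 - 2 * \<epsilon>) = (h (snd p) powr (-\<epsilon>))\<^sup>2"
      proof -
        define x where "x = h (snd p)"
        have x0: "x > 0" using hl unfolding x_def .
        have ix: "inverse x = x powr (-1)" using x0 by (simp add: powr_minus)
        have "inverse x * x powr (1 - 2 * \<epsilon>) = x powr (-1 + (1 - 2 * \<epsilon>))" unfolding powr_add ix ..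
        also have "\<dots> = x powr (-\<epsilon>) * x powr (-\<epsilon>)" by (simp add: powr_add[symmetric])
        finally show ?thesis unfolding x_def power2_eq_square .
      qed
      then show ?thesis unfolding f2_def g2_def by (simp add: power2_eq_square algebra_simps)
    qed
    also have "sqrt \<dots> = h (snd p) powr (-\<epsilon>) * w (fst p) (snd p)" using w0 by simp
    finally show ?thesis unfolding f1_def by simp
  qed
  have f20: "f2 p \<ge> 0" if "p \<in> P" for p unfolding f2_def using w0 hP[OF that] by simp
  have g20: "g2 p \<ge> 0" for p unfolding g2_def using w0 by simp
  have F1: "(\<Sum>p\<in>P. f1 p)\<^sup>2 \<le> (\<Sum>p\<in>P. f2 p) * (\<Sum>p\<in>P. g2 p)"
  proof -
    have "(\<Sum>p\<in>P. f1 p) = (\<Sum>p\<in>P. sqrt (f2 p) * sqrt (g2 p))" using f2g2 by (rule sum.cong[OF refl])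
    then show ?thesis using cs_sqrt[of P f2 g2] f20 g20 by simp
  qed
  have f2D: "(\<Sum>p\<in>P. f2 p) \<le> D"
  proof -
    have "(\<Sum>p\<in>P. f2 p) = (\<Sum>k\<in>G. \<Sum>l\<in>E. inverse (h l) * w k l)"
      unfolding P_def f2_def by (simp add: sum.cartesian_product case_prod_unfold)
    also have "\<dots> \<le> (\<Sum>k\<in>G. \<Sum>l\<in>U. inverse (h l) * w k l)"
      by (rule sum_mono, rule sum_mono2) (use fG fE w0 hE hG in \<open>auto simp: U_def\<close>)
    finally show ?thesis unfolding D_def w_def .
  qed
  have g2W: "(\<Sum>p\<in>P. g2 p) \<le> W"
  proof -
    have "(\<Sum>p\<in>P. g2 p) \<le> (\<Sum>p\<in>P. (h (snd p) + 2 * \<epsilon>) * w (fst p) (snd p))"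
      unfolding g2_def by (rule sum_mono, rule mult_right_mono) (use young_eps hP eps w0 in auto)
    also have "\<dots> = (\<Sum>k\<in>G. \<Sum>l\<in>E. (h l + 2 * \<epsilon>) * w k l)"
      unfolding P_def by (simp add: sum.cartesian_product case_prod_unfold)
    also have "\<dots> \<le> (\<Sum>k\<in>G. \<Sum>l\<in>U. (h l + 2 * \<epsilon>) * w k l)"
      by (rule sum_mono, rule sum_mono2) (use fG fE w0 hE hG eps in \<open>auto simp: U_def\<close>)
    also have "\<dots> = W" unfolding W_def w_def
      by (simp add: algebra_simps sum.distrib sum_distrib_left)
    finally show ?thesis .
  qed
  have f10s: "(\<Sum>p\<in>P. f1 p) \<ge> 0" using f10 by (simp add: sum_nonneg)
  have D0: "D \<ge> 0" unfolding D_def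
  proof (intro sum_nonneg)
    fix k l assume "l \<in> U"
    then have "h l \<ge> 0" using hE hG unfolding U_def by (auto intro: less_imp_le)
    then show "0 \<le> inverse (h l) * ((cmod (c k l))\<^sup>2 + (cmod (c l k))\<^sup>2)" by simp
  qed
  have "(\<Sum>p\<in>P. f1 p)\<^sup>2 \<le> D * W"
    using F1 f2D g2W by (meson order_trans mult_mono sum_nonneg f20 g20 D0)
  then have F1b: "(\<Sum>p\<in>P. f1 p) \<le> sqrt D * sqrt W"
    using f10s by (metis real_le_rsqrt real_sqrt_mult)
  have "(cmod (\<Sum>k\<in>G. \<Sum>l\<in>U. t k l))\<^sup>2 \<le> S\<^sup>2"
    unfolding T using TS by (simp add: power_mono)
  also have "\<dots> \<le> (\<Sum>p\<in>P. f1 p) * (\<Sum>p\<in>P. g1 p)" by (rule SS)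
  also have "\<dots> \<le> (sqrt D * sqrt W) * Y"
    by (rule mult_mono[OF F1b gY]) (use f10s g10 F1b in \<open>auto intro: sum_nonneg\<close>)
  finally show ?thesis unfolding t_def D_def W_def Y_def by simp
qed


lemma spin_herm: "spin n a k l = cnj (spin n a l k)"
proof -
  consider "a = 1" | "a = 2" | "a \<noteq> 1 \<and> a \<noteq> 2" by blast
  then show ?thesis
  proof cases
    case 1 then show ?thesis unfolding spin_def spM_def by (simp add: complex_cnj_divide add.commute)
  next
    case 2
    have c: "cnj (2 * \<i>) = - (2 * \<i>)" by simp
    have "(x - y) / (2 * \<i>) = (y - x) / (- (2 * \<i>))" for x y :: complex
      by (metis divide_minus_right minus_diff_eq minus_divide_left)
    then show ?thesis using 2 unfolding spin_def spM_def complex_cnj_divide complex_cnj_diff c by simp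
  next
    case 3 then show ?thesis unfolding spin_def by auto
  qed
qed

lemma op_at_herm:
  assumes "\<And>k l. M k l = cnj (M l k)"
  shows "op_at x M \<sigma> \<tau> = cnj (op_at x M \<tau> \<sigma>)"
proof (cases "\<forall>z. z \<noteq> x \<longrightarrow> \<sigma> z = \<tau> z")
  case True
  then have T2: "\<forall>z. z \<noteq> x \<longrightarrow> \<tau> z = \<sigma> z" by auto
  have "op_at x M \<sigma> \<tau> = M (\<sigma> x) (\<tau> x)" unfolding op_at_def by (rule if_P[OF True])
  moreover have "op_at x M \<tau> \<sigma> = M (\<tau> x) (\<sigma> x)" unfolding op_at_def by (rule if_P[OF T2])
  ultimately show ?thesis using assms[of "\<sigma> x" "\<tau> x"] by simp
next
  case False
  then have F2: "\<not> (\<forall>z. z \<noteq> x \<longrightarrow> \<tau> z = \<sigma> z)" by auto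
  have "op_at x M \<sigma> \<tau> = 0" unfolding op_at_def by (rule if_not_P[OF False])
  moreover have "op_at x M \<tau> \<sigma> = 0" unfolding op_at_def by (rule if_not_P[OF F2])
  ultimately show ?thesis by simp
qed

lemma mmul_herm:
  assumes "\<And>\<sigma> \<tau>. X \<sigma> \<tau> = cnj (X \<tau> \<sigma>)" "\<And>\<sigma> \<tau>. Y \<sigma> \<tau> = cnj (Y \<tau> \<sigma>)"
  shows "cnj (mmul I X Y \<tau> \<sigma>) = mmul I Y X \<sigma> \<tau>"
  unfolding mmul_def cnj_sum
proof (rule sum.cong[OF refl])
  fix \<rho> show "cnj (X \<tau> \<rho> * Y \<rho> \<sigma>) = Y \<sigma> \<rho> * X \<rho> \<tau>"
    using assms(1)[of \<rho> \<tau>] assms(2)[of \<sigma> \<rho>] by (simp add: mult.commute)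
qed

lemma mod_sym:
  fixes a M :: int
  assumes "M \<ge> 0" "even M"
  shows "(a mod M = 1 \<or> a mod M = M - 1) \<longleftrightarrow> ((- a) mod M = 1 \<or> (- a) mod M = M - 1)"
proof (cases "M = 0")
  case True then show ?thesis by auto
next
  case False
  then have M: "M > 0" using assms by simp
  have M2: "M \<noteq> 1" using assms(2) by auto
  have r: "(- a) mod M = (if a mod M = 0 then 0 else M - a mod M)" using M by (simp add: zmod_zminus1_eq_if)
  show ?thesis using M M2 unfolding r by auto
qed

lemma nn_sym: "nn d L x y = nn d L y x"
proof -
  define Q where "Q = (\<lambda>a::int. a mod (2 * int L) = 1 \<or> a mod (2 * int L) = 2 * int L - 1)"
  have nq: "nn d L u v \<longleftrightarrow> u \<in> box d L \<and> v \<in> box d L \<and>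
     (\<exists>i<d. Q (u ! i - v ! i) \<and> (\<forall>j<d. j \<noteq> i \<longrightarrow> u ! j = v ! j))" for u v
    unfolding nn_def Q_def ..
  have QQ: "Q (x ! i - y ! i) = Q (y ! i - x ! i)" for i
    using mod_sym[of "2 * int L" "y ! i - x ! i"] unfolding Q_def by simp
  show ?thesis unfolding nq using QQ by auto
qed

lemma sum_swap_pairs:
  assumes "\<And>x y. R x y = R y x"
  shows "(\<Sum>p\<in>{(x, y). R x y}. f (snd p) (fst p)) = (\<Sum>p\<in>{(x, y). R x y}. f (fst p) (snd p))"
  by (rule sum.reindex_bij_witness[of _ prod.swap prod.swap]) (use assms in auto)

lemma Hp_eq: "Hp n d L B \<sigma> \<tau> = (1/2) * (\<Sum>p\<in>{(x,y). nn d L x y}. \<Sum>a\<in>{1,2,3::nat}.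
                 mmul (confs n d L) (op_at (fst p) (spin n a)) (op_at (snd p) (spin n a)) \<sigma> \<tau>)
            - complex_of_real B * (\<Sum>x\<in>box d L. (-1) ^ nat (\<bar>sum_list x\<bar>) * op_at x (spin n 3) \<sigma> \<tau>)"
  unfolding Hp_def Let_def by (simp add: case_prod_unfold)

lemma Hp_herm: "herm (confs n d L) (Hp n d L B)"
  unfolding herm_def
proof (intro ballI)
  fix \<sigma> \<tau>
  define I where "I = confs n d L"
  have sh: "\<And>a k l. spin n a k l = cnj (spin n a l k)" by (rule spin_herm)
  have oh: "\<And>x a \<sigma> \<tau>. op_at x (spin n a) \<sigma> \<tau> = cnj (op_at x (spin n a) \<tau> \<sigma>)"
    by (rule op_at_herm) (rule sh)
  have A: "cnj (\<Sum>p\<in>{(x,y). nn d L x y}. \<Sum>a\<in>{1,2,3::nat}. mmul I (op_at (fst p) (spin n a)) (op_at (snd p) (spin n a)) \<tau> \<sigma>)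
      = (\<Sum>p\<in>{(x,y). nn d L x y}. \<Sum>a\<in>{1,2,3::nat}. mmul I (op_at (fst p) (spin n a)) (op_at (snd p) (spin n a)) \<sigma> \<tau>)"
  proof -
    have "cnj (\<Sum>p\<in>{(x,y). nn d L x y}. \<Sum>a\<in>{1,2,3::nat}. mmul I (op_at (fst p) (spin n a)) (op_at (snd p) (spin n a)) \<tau> \<sigma>)
      = (\<Sum>p\<in>{(x,y). nn d L x y}. \<Sum>a\<in>{1,2,3::nat}. mmul I (op_at (snd p) (spin n a)) (op_at (fst p) (spin n a)) \<sigma> \<tau>)"
      unfolding cnj_sum by (intro sum.cong refl) (rule mmul_herm; rule oh)
    also have "\<dots> = (\<Sum>p\<in>{(x,y). nn d L x y}. \<Sum>a\<in>{1,2,3::nat}. mmul I (op_at (fst p) (spin n a)) (op_at (snd p) (spin n a)) \<sigma> \<tau>)"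
    proof -
      define F where "F = (\<lambda>x y. \<Sum>a\<in>{1,2,3::nat}. mmul I (op_at x (spin n a)) (op_at y (spin n a)) \<sigma> \<tau>)"
      show ?thesis using sum_swap_pairs[of "nn d L" F, OF nn_sym] unfolding F_def by simp
    qed
    finally show ?thesis .
  qed
  have Bt: "cnj (\<Sum>x\<in>box d L. (-1) ^ nat (\<bar>sum_list x\<bar>) * op_at x (spin n 3) \<tau> \<sigma>)
     = (\<Sum>x\<in>box d L. (-1) ^ nat (\<bar>sum_list x\<bar>) * op_at x (spin n 3) \<sigma> \<tau>)"
    unfolding cnj_sum by (rule sum.cong) (auto simp: oh[of _ 3 \<sigma> \<tau>])
  show "Hp n d L B \<sigma> \<tau> = cnj (Hp n d L B \<tau> \<sigma>)"
    unfolding Hp_eq I_def[symmetric] using A Bt by simp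
qed

lemma finite_box: "finite (box d L)"
proof -
  have "box d L \<subseteq> {xs. set xs \<subseteq> {- int L + 1..int L} \<and> length xs = d}"
    unfolding box_def by (auto simp: in_set_conv_nth)
  then show ?thesis by (rule finite_subset) (simp add: finite_lists_length_eq)
qed

lemma finite_confs: "finite (confs n d L)"
proof -
  have "confs n d L \<subseteq> (\<lambda>f x. if x \<in> box d L then f x else 0) ` (PiE (box d L) (\<lambda>_. {0..n}))"
  proof
    fix \<sigma> assume s: "\<sigma> \<in> confs n d L"
    have "restrict \<sigma> (box d L) \<in> PiE (box d L) (\<lambda>_. {0..n})" using s unfolding confs_def by auto
    moreover have "\<sigma> = (\<lambda>x. if x \<in> box d L then restrict \<sigma> (box d L) x else 0)"
      using s unfolding confs_def by auto
    ultimately show "\<sigma> \<in> (\<lambda>f x. if x \<in> box d L then f x else 0) ` (PiE (box d L) (\<lambda>_. {0..n}))" by blast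
  qed
  then show ?thesis by (rule finite_subset) (simp add: finite_box finite_PiE)
qed

lemma confs_ne: "confs n d L \<noteq> {}"
proof -
  have "(\<lambda>_. 0) \<in> confs n d L" unfolding confs_def by auto
  then show ?thesis by blast
qed


lemma re_zrz: "Re (z * complex_of_real r * cnj z) = r * (cmod z)\<^sup>2"
proof -
  have e: "z * cnj z = complex_of_real ((cmod z)\<^sup>2)" by (rule complex_norm_square[symmetric])
  have "z * complex_of_real r * cnj z = complex_of_real r * complex_of_real ((cmod z)\<^sup>2)"
    by (simp only: mult.commute[of z "complex_of_real r"] mult.assoc e)
  also have "\<dots> = complex_of_real (r * (cmod z)\<^sup>2)" by (simp only: of_real_mult)
  finally show ?thesis by (simp only: Re_complex_of_real)
qed

lemma re_czrz: "Re (cnj z * complex_of_real r * z) = r * (cmod z)\<^sup>2"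
  using re_zrz[of z r] by (simp add: mult_ac)

context sdata
begin

definition diag :: "op \<Rightarrow> (nat \<Rightarrow> complex) \<Rightarrow> bool" where
  "diag D d \<longleftrightarrow> (\<forall>p q. p < m \<longrightarrow> q < m \<longrightarrow> me I e D p q = (if p = q then d q else 0))"

lemma me_dR:
  assumes "diag D d" "k < m" "l < m"
  shows "me I e (mmul I X D) k l = me I e X k l * d l"
proof -
  have "me I e (mmul I X D) k l = (\<Sum>p<m. me I e X k p * me I e D p l)" by (rule me_mmul[OF assms(3)])
  also have "\<dots> = (\<Sum>p<m. if p = l then me I e X k l * d l else 0)"
    by (rule sum.cong[OF refl]) (use assms in \<open>auto simp: diag_def\<close>)
  also have "\<dots> = me I e X k l * d l" using assms(3) by simp
  finally show ?thesis .
qed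

lemma me_dL:
  assumes "diag D d" "k < m" "l < m"
  shows "me I e (mmul I D X) k l = d k * me I e X k l"
proof -
  have "me I e (mmul I D X) k l = (\<Sum>p<m. me I e D k p * me I e X p l)" by (rule me_mmul[OF assms(3)])
  also have "\<dots> = (\<Sum>p<m. if p = k then d k * me I e X k l else 0)"
    by (rule sum.cong[OF refl]) (use assms in \<open>auto simp: diag_def\<close>)
  also have "\<dots> = d k * me I e X k l" using assms(2) by simp
  finally show ?thesis .
qed

lemma me_XDY:
  assumes "diag D d" "k < m" "j < m"
  shows "me I e (mmul I (mmul I X D) Y) k j = (\<Sum>l<m. me I e X k l * d l * me I e Y l j)"
  unfolding me_mmul[OF assms(3)] by (rule sum.cong[OF refl]) (use me_dR[OF assms(1,2)] in simp)

lemma diag_Fop: "diag (Fop I m e lam f) (\<lambda>q. complex_of_real (f (lam q)))"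
  unfolding diag_def using me_Fop by auto

lemma diag_H: "diag H (\<lambda>q. complex_of_real (lam q))"
  unfolding diag_def using me_H by auto

lemma diag_mid: "diag mid (\<lambda>q. 1)"
  unfolding diag_def using me_mid by auto

lemma diag_msub: "diag X x \<Longrightarrow> diag Y y \<Longrightarrow> diag (msub X Y) (\<lambda>q. x q - y q)"
  unfolding diag_def me_msub by auto

lemma omega_like:
  "mtr I (mmul I (Fop I m e lam f) X) / mtr I (Fop I m e lam f)
    = (\<Sum>k<m. complex_of_real (f (lam k)) * me I e X k k) / (\<Sum>k<m. complex_of_real (f (lam k)))"
proof -
  have "mtr I (mmul I (Fop I m e lam f) X) = (\<Sum>k<m. complex_of_real (f (lam k)) * me I e X k k)"
    unfolding mtr_me by (rule sum.cong[OF refl]) (use me_dL[OF diag_Fop] in simp)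
  moreover have "mtr I (Fop I m e lam f) = (\<Sum>k<m. complex_of_real (f (lam k)))"
    unfolding mtr_me by (rule sum.cong[OF refl]) (use me_Fop in simp)
  ultimately show ?thesis by simp
qed

end

lemma Hcal_herm:
  assumes "herm I H"
  shows "herm I (msub H (mscale (complex_of_real E) mid))"
  unfolding herm_def
proof (intro ballI)
  fix \<sigma> \<tau> assume st: "\<sigma> \<in> I" "\<tau> \<in> I"
  have "H \<sigma> \<tau> = cnj (H \<tau> \<sigma>)" using assms st unfolding herm_def by blast
  then show "msub H (mscale (complex_of_real E) mid) \<sigma> \<tau> = cnj (msub H (mscale (complex_of_real E) mid) \<tau> \<sigma>)"
    unfolding msub_def mscale_def mid_def by auto
qed

lemma main_ineq:
  fixes n d L :: nat and B \<epsilon> :: real and A C :: op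
  assumes eps: "0 < \<epsilon>" "\<epsilon> < 1/2"
  defines "I \<equiv> confs n d L" and "H \<equiv> Hp n d L B" and "\<omega> \<equiv> omega n d L B"
  shows "(cmod (\<omega> (comm I C A)))\<^sup>2
           \<le> sqrt (Re (Dtil n d L B C))
             * sqrt (2 * \<epsilon> * Re (\<omega> (acomm I C (madj C))) + Re (\<omega> (comm I (comm I (madj C) H) C)))
             * (Re (\<omega> (mmul I (mmul I A (Hpow n d L B \<epsilon>)) (madj A)))
                + Re (\<omega> (mmul I (mmul I (madj A) (Hpow n d L B \<epsilon>)) A)))"
proof -
  have fin: "finite I" unfolding I_def by (rule finite_confs)
  have ne: "I \<noteq> {}" unfolding I_def by (rule confs_ne)
  have hH: "herm I H" unfolding I_def H_def by (rule Hp_herm)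
  obtain m e lam where F: "fam I H m e lam" and Cm: "compl I m e" using spectral[OF fin hH] by blast
  interpret S: sdata I H m e lam using fin hH F Cm by unfold_locales
  define E where "E = E0 n d L B"
  have E: "E = Min (lam ` {..<m})" unfolding E_def E0_def using S.spec_eq unfolding I_def H_def by simp
  have m0: "m > 0" using S.m_pos[OF ne] .
  have Ele: "E \<le> lam l" if "l < m" for l unfolding E using that by (intro Min_le) auto
  have "Min (lam ` {..<m}) \<in> lam ` {..<m}" by (rule Min_in) (use m0 in auto)
  then have Ein: "\<exists>k<m. lam k = E" unfolding E by auto
  define h where "h = (\<lambda>l. lam l - E)"
  have Hcal_eq: "Hcal n d L B = msub H (mscale (complex_of_real E) mid)"
    unfolding Hcal_def E_def H_def ..
  have hHc: "herm I (Hcal n d L B)" unfolding Hcal_eq by (rule Hcal_herm[OF hH])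
  have Fc: "fam I (Hcal n d L B) m e h"
    unfolding fam_def
  proof (intro conjI allI impI)
    fix i assume i: "i < m"
    show "supp I (e i)" by (rule S.sp[OF i])
    show "happ I (Hcal n d L B) (e i) = (\<lambda>\<sigma>. complex_of_real (h i) * e i \<sigma>)"
      unfolding Hcal_eq happ_msub happ_mscale happ_mid[OF fin S.sp[OF i]] S.eig[OF i] h_def
      by (simp add: algebra_simps)
  next
    fix i j assume "i < m" "j < m" then show "ip I (e i) (e j) = (if i = j then 1 else 0)" by (rule S.orth)
  qed
  interpret S2: sdata I "Hcal n d L B" m e h using fin hHc Fc Cm by unfold_locales
  define ind where "ind = (\<lambda>x::real. if x = E then (1::real) else 0)"
  have P0eq: "P0 n d L B = Fop I m e lam ind"
    unfolding P0_def ind_def E_def[symmetric] I_def[symmetric] H_def[symmetric] by (rule S.fcalc_eq)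
  have Hinv_eq: "Hinv n d L B = Fop I m e h inverse"
    unfolding Hinv_def I_def[symmetric] by (rule S2.fcalc_eq)
  have Hpow_eq: "Hpow n d L B \<epsilon> = Fop I m e h (\<lambda>x. x powr \<epsilon>)"
    unfolding Hpow_def I_def[symmetric] by (rule S2.fcalc_eq)
  have dP0: "S.diag (P0 n d L B) (\<lambda>q. complex_of_real (ind (lam q)))"
    unfolding P0eq by (rule S.diag_Fop)
  have dPex: "S.diag (Pex n d L B) (\<lambda>q. 1 - complex_of_real (ind (lam q)))"
    unfolding Pex_def by (rule S.diag_msub[OF S.diag_mid dP0])
  have dHinv: "S.diag (Hinv n d L B) (\<lambda>q. complex_of_real (inverse (h q)))"
    unfolding Hinv_eq using S2.diag_Fop unfolding S.diag_def S2.diag_def .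
  have dHpow: "S.diag (Hpow n d L B \<epsilon>) (\<lambda>q. complex_of_real (h q powr \<epsilon>))"
    unfolding Hpow_eq using S2.diag_Fop unfolding S.diag_def S2.diag_def .
  define G where "G = {k. k < m \<and> lam k = E}"
  have fG: "finite G" unfolding G_def by simp
  have Gf: "G = {k \<in> {..<m}. lam k = E}" unfolding G_def by auto
  have cG: "card G > 0" using Ein fG unfolding G_def by (auto simp: card_gt_0_iff)
  have om: "\<omega> X = (\<Sum>k\<in>G. me I e X k k) / of_nat (card G)" for X
  proof -
    have "\<omega> X = (\<Sum>k<m. complex_of_real (ind (lam k)) * me I e X k k) / (\<Sum>k<m. complex_of_real (ind (lam k)))"
      unfolding \<omega>_def omega_def I_def[symmetric] P0eq S.omega_like ..
    also have "(\<Sum>k<m. complex_of_real (ind (lam k)) * me I e X k k) = (\<Sum>k\<in>G. me I e X k k)"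
    proof -
      have "(\<Sum>k\<in>G. me I e X k k) = (\<Sum>k<m. if lam k = E then me I e X k k else 0)"
        unfolding Gf by (rule sum.inter_filter) simp
      also have "\<dots> = (\<Sum>k<m. complex_of_real (ind (lam k)) * me I e X k k)"
        by (rule sum.cong) (auto simp: ind_def)
      finally show ?thesis by simp
    qed
    also have "(\<Sum>k<m. complex_of_real (ind (lam k))) = of_nat (card G)"
    proof -
      have "of_nat (card G) = (\<Sum>k\<in>G. (1::complex))" by simp
      also have "\<dots> = (\<Sum>k<m. if lam k = E then 1 else 0)"
        unfolding Gf by (rule sum.inter_filter) simp
      also have "\<dots> = (\<Sum>k<m. complex_of_real (ind (lam k)))"
        by (rule sum.cong) (auto simp: ind_def)
      finally show ?thesis by simp
    qed
    finally show ?thesis .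
  qed
  have reom: "Re (\<omega> X) = (\<Sum>k\<in>G. Re (me I e X k k)) / real (card G)" for X
    unfolding om by simp
  define c where "c = me I e C"
  define a where "a = me I e A"
  have Gm: "k \<in> G \<Longrightarrow> k < m" for k unfolding G_def by auto
  have GE: "k \<in> G \<Longrightarrow> lam k = E" for k unfolding G_def by auto
  have ind_inv: "(1 - complex_of_real (ind (lam l))) * complex_of_real (inverse (h l)) = complex_of_real (inverse (h l))" for l
    unfolding ind_def h_def by auto
  have t1: "me I e (comm I C A) k k = (\<Sum>l<m. c k l * a l k - a k l * c l k)" if "k < m" for k
    unfolding comm_def me_msub S.me_mmul[OF that] c_def a_def by (simp add: sum_subtractf)
  have t2: "Re (me I e (mmul I (mmul I (mmul I C (Pex n d L B)) (Hinv n d L B)) (madj C)) k k)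
      = (\<Sum>l<m. inverse (h l) * (cmod (c k l))\<^sup>2)" if "k < m" for k
  proof -
    have "me I e (mmul I (mmul I (mmul I C (Pex n d L B)) (Hinv n d L B)) (madj C)) k k
        = (\<Sum>l<m. c k l * complex_of_real (inverse (h l)) * cnj (c k l))"
      unfolding S.me_XDY[OF dHinv that that] me_madj c_def
    proof (rule sum.cong[OF refl])
      fix l assume "l \<in> {..<m}"
      then have l: "l < m" by simp
      have "me I e (mmul I C (Pex n d L B)) k l * complex_of_real (inverse (h l)) = me I e C k l * complex_of_real (inverse (h l))"
        unfolding S.me_dR[OF dPex that l] using ind_inv[of l] by (simp only: mult.assoc)
      then show "me I e (mmul I C (Pex n d L B)) k l * complex_of_real (inverse (h l)) * cnj (me I e C k l) = me I e C k l * complex_of_real (inverse (h l)) * cnj (me I e C k l)"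
        by simp
    qed
    then show ?thesis by (simp only: Re_sum re_zrz)
  qed
  have t3: "Re (me I e (mmul I (mmul I (mmul I (madj C) (Pex n d L B)) (Hinv n d L B)) C) k k)
      = (\<Sum>l<m. inverse (h l) * (cmod (c l k))\<^sup>2)" if "k < m" for k
  proof -
    have "me I e (mmul I (mmul I (mmul I (madj C) (Pex n d L B)) (Hinv n d L B)) C) k k
        = (\<Sum>l<m. cnj (c l k) * complex_of_real (inverse (h l)) * c l k)"
      unfolding S.me_XDY[OF dHinv that that] c_def
    proof (rule sum.cong[OF refl])
      fix l assume "l \<in> {..<m}"
      then have l: "l < m" by simp
      have "me I e (mmul I (madj C) (Pex n d L B)) k l * complex_of_real (inverse (h l)) = cnj (me I e C l k) * complex_of_real (inverse (h l))"
        unfolding S.me_dR[OF dPex that l] me_madj using ind_inv[of l] by (simp only: mult.assoc)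
      then show "me I e (mmul I (madj C) (Pex n d L B)) k l * complex_of_real (inverse (h l)) * me I e C l k = cnj (me I e C l k) * complex_of_real (inverse (h l)) * me I e C l k"
        by simp
    qed
    then show ?thesis by (simp only: Re_sum re_czrz)
  qed
  have t4: "Re (me I e (acomm I C (madj C)) k k) = (\<Sum>l<m. (cmod (c k l))\<^sup>2 + (cmod (c l k))\<^sup>2)" if "k < m" for k
  proof -
    have "me I e (acomm I C (madj C)) k k = (\<Sum>l<m. c k l * complex_of_real 1 * cnj (c k l)) + (\<Sum>l<m. cnj (c l k) * complex_of_real 1 * c l k)"
      unfolding acomm_def me_madd S.me_mmul[OF that] me_madj c_def by simp
    then show ?thesis by (simp only: Re_sum re_zrz re_czrz plus_complex.sel sum.distrib) simp
  qed
  have t5: "Re (me I e (comm I (comm I (madj C) H) C) k k) = (\<Sum>l<m. h l * ((cmod (c k l))\<^sup>2 + (cmod (c l k))\<^sup>2))"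
    if "k < m" "lam k = E" for k
  proof -
    have inner: "me I e (comm I (madj C) H) p q = cnj (c q p) * complex_of_real (lam q - lam p)" if "p < m" "q < m" for p q
      unfolding comm_def me_msub S.me_dR[OF S.diag_H that] S.me_dL[OF S.diag_H that] me_madj c_def
      by (simp add: algebra_simps)
    have "me I e (comm I (comm I (madj C) H) C) k k
       = (\<Sum>l<m. cnj (c l k) * complex_of_real (h l) * c l k) + (\<Sum>l<m. c k l * complex_of_real (h l) * cnj (c k l))"
    proof -
      have "me I e (comm I (comm I (madj C) H) C) k k = (\<Sum>l<m. me I e (comm I (madj C) H) k l * c l k) - (\<Sum>l<m. c k l * me I e (comm I (madj C) H) l k)"
        unfolding comm_def[of I "comm I (madj C) H" C] me_msub S.me_mmul[OF that(1)] c_def ..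
      also have "(\<Sum>l<m. me I e (comm I (madj C) H) k l * c l k) = (\<Sum>l<m. cnj (c l k) * complex_of_real (h l) * c l k)"
        by (rule sum.cong[OF refl]) (simp add: inner that h_def mult_ac)
      also have "(\<Sum>l<m. c k l * me I e (comm I (madj C) H) l k) = (\<Sum>l<m. - (c k l * complex_of_real (h l) * cnj (c k l)))"
      proof (rule sum.cong[OF refl])
        fix l assume "l \<in> {..<m}"
        then have l: "l < m" by simp
        show "c k l * me I e (comm I (madj C) H) l k = - (c k l * complex_of_real (h l) * cnj (c k l))"
          unfolding inner[OF l that(1)] using that(2) by (simp add: h_def algebra_simps)
      qed
      also have "\<dots> = - (\<Sum>l<m. c k l * complex_of_real (h l) * cnj (c k l))" by (simp add: sum_negf)
      finally show ?thesis by simp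
    qed
    then show ?thesis by (simp only: Re_sum re_zrz re_czrz plus_complex.sel distrib_left sum.distrib)
  qed
  have t6: "Re (me I e (mmul I (mmul I A (Hpow n d L B \<epsilon>)) (madj A)) k k) = (\<Sum>l<m. h l powr \<epsilon> * (cmod (a k l))\<^sup>2)"
    if "k < m" for k
    unfolding S.me_XDY[OF dHpow that that] me_madj a_def Re_sum re_zrz ..
  have t7: "Re (me I e (mmul I (mmul I (madj A) (Hpow n d L B \<epsilon>)) A) k k) = (\<Sum>l<m. h l powr \<epsilon> * (cmod (a l k))\<^sup>2)"
    if "k < m" for k
    unfolding S.me_XDY[OF dHpow that that] me_madj a_def Re_sum re_czrz ..
  define Ex where "Ex = {..<m} - G"
  have U: "G \<union> Ex = {..<m}" unfolding Ex_def G_def by auto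
  have hE: "h l > 0" if "l \<in> Ex" for l using that Ele unfolding Ex_def G_def h_def by force
  have hG: "h l = 0" if "l \<in> G" for l using that unfolding G_def h_def by auto
  have NI: "(cmod (\<Sum>k\<in>G. \<Sum>l\<in>G \<union> Ex. c k l * a l k - a k l * c l k))\<^sup>2
    \<le> sqrt (\<Sum>k\<in>G. \<Sum>l\<in>G \<union> Ex. inverse (h l) * ((cmod (c k l))\<^sup>2 + (cmod (c l k))\<^sup>2))
      * sqrt (2 * \<epsilon> * (\<Sum>k\<in>G. \<Sum>l\<in>G \<union> Ex. (cmod (c k l))\<^sup>2 + (cmod (c l k))\<^sup>2)
              + (\<Sum>k\<in>G. \<Sum>l\<in>G \<union> Ex. h l * ((cmod (c k l))\<^sup>2 + (cmod (c l k))\<^sup>2)))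
      * (\<Sum>k\<in>G. \<Sum>l\<in>G \<union> Ex. h l powr \<epsilon> * ((cmod (a k l))\<^sup>2 + (cmod (a l k))\<^sup>2))"
    by (rule num_ineq[OF fG _ _ hE hG eps]) (auto simp: Ex_def)
  define N where "N = real (card G)"
  have N0: "N > 0" unfolding N_def using cG by simp
  define T where "T = (\<Sum>k\<in>G. \<Sum>l<m. c k l * a l k - a k l * c l k)"
  define D where "D = (\<Sum>k\<in>G. \<Sum>l<m. inverse (h l) * ((cmod (c k l))\<^sup>2 + (cmod (c l k))\<^sup>2))"
  define W where "W = 2 * \<epsilon> * (\<Sum>k\<in>G. \<Sum>l<m. (cmod (c k l))\<^sup>2 + (cmod (c l k))\<^sup>2)
              + (\<Sum>k\<in>G. \<Sum>l<m. h l * ((cmod (c k l))\<^sup>2 + (cmod (c l k))\<^sup>2))"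
  define Y where "Y = (\<Sum>k\<in>G. \<Sum>l<m. h l powr \<epsilon> * ((cmod (a k l))\<^sup>2 + (cmod (a l k))\<^sup>2))"
  have NI2: "(cmod T)\<^sup>2 \<le> sqrt D * sqrt W * Y" using NI unfolding U T_def D_def W_def Y_def .
  have L: "\<omega> (comm I C A) = T / of_nat (card G)"
    unfolding om T_def using t1 Gm by (simp cong: sum.cong)
  have R1: "Re (Dtil n d L B C) = D / N"
  proof -
    have "Re (Dtil n d L B C) = (\<Sum>k\<in>G. \<Sum>l<m. inverse (h l) * (cmod (c k l))\<^sup>2) / N + (\<Sum>k\<in>G. \<Sum>l<m. inverse (h l) * (cmod (c l k))\<^sup>2) / N"
      unfolding Dtil_def Let_def I_def[symmetric] \<omega>_def[symmetric] plus_complex.sel reom N_def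
      using t2 t3 Gm by (simp cong: sum.cong)
    then show ?thesis unfolding D_def by (simp add: add_divide_distrib[symmetric] sum.distrib[symmetric] distrib_left)
  qed
  have R2: "2 * \<epsilon> * Re (\<omega> (acomm I C (madj C))) + Re (\<omega> (comm I (comm I (madj C) H) C)) = W / N"
  proof -
    have "Re (\<omega> (acomm I C (madj C))) = (\<Sum>k\<in>G. \<Sum>l<m. (cmod (c k l))\<^sup>2 + (cmod (c l k))\<^sup>2) / N"
      unfolding reom N_def using t4 Gm by (simp cong: sum.cong)
    moreover have "Re (\<omega> (comm I (comm I (madj C) H) C)) = (\<Sum>k\<in>G. \<Sum>l<m. h l * ((cmod (c k l))\<^sup>2 + (cmod (c l k))\<^sup>2)) / N"
      unfolding reom N_def using t5 Gm GE by (simp cong: sum.cong)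
    ultimately show ?thesis unfolding W_def by (simp add: add_divide_distrib)
  qed
  have R3: "Re (\<omega> (mmul I (mmul I A (Hpow n d L B \<epsilon>)) (madj A))) + Re (\<omega> (mmul I (mmul I (madj A) (Hpow n d L B \<epsilon>)) A)) = Y / N"
  proof -
    have "Re (\<omega> (mmul I (mmul I A (Hpow n d L B \<epsilon>)) (madj A))) = (\<Sum>k\<in>G. \<Sum>l<m. h l powr \<epsilon> * (cmod (a k l))\<^sup>2) / N"
      unfolding reom N_def using t6 Gm by (simp cong: sum.cong)
    moreover have "Re (\<omega> (mmul I (mmul I (madj A) (Hpow n d L B \<epsilon>)) A)) = (\<Sum>k\<in>G. \<Sum>l<m. h l powr \<epsilon> * (cmod (a l k))\<^sup>2) / N"
      unfolding reom N_def using t7 Gm by (simp cong: sum.cong)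
    ultimately show ?thesis unfolding Y_def by (simp add: add_divide_distrib[symmetric] sum.distrib[symmetric] distrib_left)
  qed
  have "(cmod (\<omega> (comm I C A)))\<^sup>2 = (cmod T)\<^sup>2 / N\<^sup>2"
    unfolding L N_def by (simp add: norm_divide power_divide)
  also have "\<dots> \<le> sqrt D * sqrt W * Y / N\<^sup>2"
    using NI2 N0 by (simp add: divide_right_mono)
  also have "\<dots> = sqrt (D / N) * sqrt (W / N) * (Y / N)"
    using N0 by (simp add: real_sqrt_divide power2_eq_square field_simps)
  finally show ?thesis unfolding R1 R2 R3 .
qed

theorem lemma5p1:
  fixes n d :: nat
  assumes "n \<ge> 1" and "d \<ge> 1"
  shows "\<exists>\<epsilon>0 > 0. \<exists>\<kappa> :: real \<Rightarrow> real.
     (\<forall>\<epsilon>\<in>{0<..<\<epsilon>0}. \<kappa> \<epsilon> > 0) \<and> (\<kappa> \<longlongrightarrow> 0) (at_right 0) \<and>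
     (\<forall>\<epsilon>\<in>{0<..<\<epsilon>0}. \<forall>L::nat. L \<ge> 1 \<longrightarrow> (\<forall>B::real. \<forall>A C :: op.
        (let I = confs n d L; \<omega> = omega n d L B; H = Hp n d L B in
         (cmod (\<omega> (comm I C A)))\<^sup>2
           \<le> sqrt (Re (Dtil n d L B C))
             * sqrt (\<kappa> \<epsilon> * Re (\<omega> (acomm I C (madj C))) + Re (\<omega> (comm I (comm I (madj C) H) C)))
             * (Re (\<omega> (mmul I (mmul I A (Hpow n d L B \<epsilon>)) (madj A)))
                + Re (\<omega> (mmul I (mmul I (madj A) (Hpow n d L B \<epsilon>)) A))))))"
proof -
  have tl: "((\<lambda>\<epsilon>::real. 2 * \<epsilon>) \<longlongrightarrow> 0) (at_right 0)"
  proof -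
    have "((\<lambda>\<epsilon>::real. 2 * \<epsilon>) \<longlongrightarrow> 2 * 0) (at_right 0)" by (intro tendsto_intros)
    then show ?thesis by simp
  qed
  have main: "\<forall>\<epsilon>\<in>{0<..<1/2}. \<forall>L::nat. L \<ge> 1 \<longrightarrow> (\<forall>B::real. \<forall>A C :: op.
        (let I = confs n d L; \<omega> = omega n d L B; H = Hp n d L B in
         (cmod (\<omega> (comm I C A)))\<^sup>2
           \<le> sqrt (Re (Dtil n d L B C))
             * sqrt ((\<lambda>\<epsilon>::real. 2 * \<epsilon>) \<epsilon> * Re (\<omega> (acomm I C (madj C))) + Re (\<omega> (comm I (comm I (madj C) H) C)))
             * (Re (\<omega> (mmul I (mmul I A (Hpow n d L B \<epsilon>)) (madj A)))
                + Re (\<omega> (mmul I (mmul I (madj A) (Hpow n d L B \<epsilon>)) A)))))"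
  proof (intro ballI allI impI)
    fix \<epsilon> :: real and L :: nat and B :: real and A C :: op
    assume "\<epsilon> \<in> {0<..<1/2}"
    then have e: "0 < \<epsilon>" "\<epsilon> < 1/2" by auto
    show "let I = confs n d L; \<omega> = omega n d L B; H = Hp n d L B in
         (cmod (\<omega> (comm I C A)))\<^sup>2
           \<le> sqrt (Re (Dtil n d L B C))
             * sqrt ((\<lambda>\<epsilon>::real. 2 * \<epsilon>) \<epsilon> * Re (\<omega> (acomm I C (madj C))) + Re (\<omega> (comm I (comm I (madj C) H) C)))
             * (Re (\<omega> (mmul I (mmul I A (Hpow n d L B \<epsilon>)) (madj A)))
                + Re (\<omega> (mmul I (mmul I (madj A) (Hpow n d L B \<epsilon>)) A)))"
      unfolding Let_def using main_ineq[OF e, of n d L B C A] by simp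
  qed
  have pos: "\<forall>\<epsilon>\<in>{0<..<1/2::real}. (\<lambda>\<epsilon>::real. 2 * \<epsilon>) \<epsilon> > 0" by auto
  show ?thesis
    by (rule exI[of _ "1/2"], rule conjI, simp, rule exI[of _ "\<lambda>\<epsilon>::real. 2 * \<epsilon>"]) (use tl main pos in blast)
qed

end
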